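(* Let $k=k_0m$ with $k_0\ge1$. For any initial condition $(X(0),Z(0),V_{s,\alpha}(0),W_{s,\alpha}(0))$ in $\mathcal M^\circ$, the flow at time $t$ of the Hamiltonian vector field $f\mapsto\{\tfrac1k\operatorname{tr}(Z^k),f\}$ is $X(t)=X(0)\exp(-tZ(0)^k)$, $Z(t)=Z(0)$, $V_{s,\alpha}(t)=V_{s,\alpha}(0)$, $W_{s,\alpha}(t)=W_{s,\alpha}(0)$.
   Context: Fix integers $m\ge2$, $n\ge1$ and $\mathbf d=(d_0,\dots,d_{m-1})\in\mathbb N^m$ with $d_0\ge1$. Indices $r,s$ range over $\mathbb Z_m$, identified with $\{0,\dots,m-1\}$ with its usual order; Kronecker deltas of such indices are taken modulo $m$. A spin index is a pair $(s,\alpha)$ with $s\in\mathbb Z_m$, $1\le\alpha\le d_s$. $\mathcal M^\bullet$ is the smooth affine variety of tuples $(X_s,Y_s,V_{s,\alpha},W_{s,\alpha})$, $X_s,Y_s\in\mathrm{Mat}(n\times n,\mathbb C)$, $V_{s,\alpha}\in\mathrm{Mat}(1\times n,\mathbb C)$, $W_{s,\alpha}\in\mathrm{Mat}(n\times1,\mathbb C)$, with $\mathrm{Id}_n+X_sY_s$, $\mathrm{Id}_n+Y_sX_s$, $\mathrm{Id}_n+W_{s,\alpha}V_{s,\alpha}$ invertible and $1+V_{s,\alpha}W_{s,\alpha}\ne0$. $X=\sum_sX_s$ is the $nm\times nm$ block matrix whose only nonzero $n\times n$ blocks are $X_s$ in block position $(s,s+1)$; $Y=\sum_sY_s$ has $Y_s$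 in block position $(s+1,s)$. $\mathcal M^\circ\subset\mathcal M^\bullet$ is the open subset where $X$ is invertible; there $Z_s=Y_s+X_s^{-1}$ and $Z=\sum_sZ_s$ with $Z_s$ in block $(s+1,s)$; points of $\mathcal M^\circ$ are equivalently described by $(X,Z,V_{s,\alpha},W_{s,\alpha})$. For a function $F$, the Hamiltonian vector field is $f\mapsto\{F,f\}$ and its flow solves $\frac{d}{dt}f=\{F,f\}$ entrywise. The quasi-Poisson bracket $\{-,-\}$ on $\mathcal M^\bullet$ is the antisymmetric biderivation given on entry functions by ($o(s,r)=\operatorname{sgn}(r-s)$ computed in $\{0,\dots,m-1\}$, $o(\alpha,\beta)=\operatorname{sgn}(\beta-\alpha)$): $\{(X_r)_{ij},(X_s)_{kl}\}=\tfrac12\delta_{s,r-1}(X_{r-1}X_r)_{kj}\delta_{il}-\tfrac12\delta_{s,r+1}\delta_{kj}(X_rX_{r+1})_{il}$; $\{(Y_r)_{ij},(Y_s)_{kl}\}=\tfrac12\delta_{s,r-1}\delta_{kj}(Y_rY_{r-1})_{il}-\tfrac12\delta_{s,r+1}(Y_{r+1}Y_r)_{kj}\delta_{il}$; $\{(X_r)_{ij},(Y_s)_{kl}\}=\delta_{sr}\big(\delta_{kj}\delta_{il}+\tfrac12(Y_rX_r)_{kj}\delta_{il}+\tfrac12\delta_{kj}(X_rY_r)_{il}\big)-\tfrac12\delta_{s,r-1}(X_r)_{kj}(Y_{r-1})_{il}+\tfrac12\delta_{s,r+1}(Y_{r+1})_{kj}(X_r)_{il}$; $\{(X_r)_{ij},(W_{s,\alpha})_k\}=\tfrac12\delta_{s,r+1}\delta_{kj}(X_rW_{r+1,\alpha})_i-\tfrac12\delta_{rs}(X_r)_{kj}(W_{r,\alpha})_i$;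 $\{(X_r)_{ij},(V_{s,\alpha})_l\}=\tfrac12\delta_{rs}(V_{r,\alpha}X_r)_j\delta_{il}-\tfrac12\delta_{s,r+1}(V_{r+1,\alpha})_j(X_r)_{il}$; $\{(Y_r)_{ij},(W_{s,\alpha})_k\}=\tfrac12\delta_{rs}\delta_{kj}(Y_rW_{r,\alpha})_i-\tfrac12\delta_{s,r+1}(Y_r)_{kj}(W_{r+1,\alpha})_i$; $\{(Y_r)_{ij},(V_{s,\alpha})_l\}=\tfrac12\delta_{s,r+1}(V_{r+1,\alpha}Y_r)_j\delta_{il}-\tfrac12\delta_{rs}(V_{r,\alpha})_j(Y_r)_{il}$; $\{(V_{s,\alpha})_j,(V_{r,\beta})_l\}=-\tfrac12o(s,r)(V_{s,\alpha})_j(V_{r,\beta})_l-\tfrac12\delta_{sr}o(\alpha,\beta)\big((V_{r,\beta})_j(V_{s,\alpha})_l+(V_{s,\alpha})_j(V_{r,\beta})_l\big)$; $\{(W_{s,\alpha})_i,(W_{r,\beta})_k\}=-\tfrac12o(s,r)(W_{r,\beta})_k(W_{s,\alpha})_i-\tfrac12\delta_{sr}o(\alpha,\beta)\big((W_{r,\beta})_k(W_{s,\alpha})_i+(W_{s,\alpha})_k(W_{r,\beta})_i\big)$; $\{(V_{s,\alpha})_j,(W_{r,\beta})_k\}=\tfrac12o(s,r)(W_{r,\beta})_k(V_{s,\alpha})_j+\delta_{sr}\delta_{\alpha\beta}\big(\delta_{kj}+\tfrac12(W_{r,\beta})_k(V_{s,\alpha})_j+\tfrac12\delta_{kj}V_{s,\alpha}W_{r,\beta}\big)+\tfrac12\delta_{sr}o(\alpha,\beta)\big(\delta_{kj}V_{s,\alpha}W_{r,\beta}+(W_{r,\beta})_k(V_{s,\alpha})_j\big)$.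 *)

theory Defs
  imports "HOL-Analysis.Analysis"
begin

section \<open>Coordinates on the space of tuples (X_s, Y_s, V_{s,alpha}, W_{s,alpha})\<close>

text \<open>The size n of the square matrices is CARD('n) for a finite index type 'n.
  The cyclic index s ranges over {0..<m} (identified with Z_m), the spin
  index alpha over {0..<d s} (0-based instead of 1-based).
  CX s i j is the (i,j) entry of X_s, CY s i j that of Y_s,
  CV s a j the j-th entry of the row vector V_{s,a},
  CW s a k the k-th entry of the column vector W_{s,a}.\<close>

datatype 'n coord = CX nat 'n 'n | CY nat 'n 'n | CV nat nat 'n | CW nat nat 'n

type_synonym 'n point = "'n coord \<Rightarrow> complex"

definition coords :: "nat \<Rightarrow> (nat \<Rightarrow> nat) \<Rightarrow> ('n::finite) coord set" where
  "coords m d =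
     {CX s i j | s i j. s < m} \<union> {CY s i j | s i j. s < m}
   \<union> {CV s a j | s a j. s < m \<and> a < d s} \<union> {CW s a j | s a j. s < m \<and> a < d s}"

definition Xm :: "('n::finite) point \<Rightarrow> nat \<Rightarrow> complex^'n^'n" where
  "Xm p s = (\<chi> i j. p (CX s i j))"
definition Ym :: "('n::finite) point \<Rightarrow> nat \<Rightarrow> complex^'n^'n" where
  "Ym p s = (\<chi> i j. p (CY s i j))"
definition Vv :: "('n::finite) point \<Rightarrow> nat \<Rightarrow> nat \<Rightarrow> complex^'n" where
  "Vv p s a = (\<chi> j. p (CV s a j))"
definition Wv :: "('n::finite) point \<Rightarrow> nat \<Rightarrow> nat \<Rightarrow> complex^'n" where
  "Wv p s a = (\<chi> j. p (CW s a j))"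

definition sucm :: "nat \<Rightarrow> nat \<Rightarrow> nat" where "sucm m r = (r + 1) mod m"
definition predm :: "nat \<Rightarrow> nat \<Rightarrow> nat" where "predm m r = (r + m - 1) mod m"

definition dlt :: "'a \<Rightarrow> 'a \<Rightarrow> complex" where "dlt a b = (if a = b then 1 else 0)"

definition ord_sgn :: "nat \<Rightarrow> nat \<Rightarrow> complex" where
  "ord_sgn s r = of_int (sgn (int r - int s))"

definition rowcol :: "complex^('n::finite) \<Rightarrow> complex^'n \<Rightarrow> complex" where
  "rowcol v w = (\<Sum>l\<in>UNIV. v $ l * w $ l)"

section \<open>Big block matrices (nm x nm), represented by their n x n blocks\<close>

type_synonym 'n bmat = "nat \<Rightarrow> nat \<Rightarrow> complex^'n^'n"

definition bmul :: "nat \<Rightarrow> ('n::finite) bmat \<Rightarrow> 'n bmat \<Rightarrow> 'n bmat" where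
  "bmul m A B = (\<lambda>a b. \<Sum>c<m. A a c ** B c b)"

definition bid :: "nat \<Rightarrow> ('n::finite) bmat" where
  "bid m = (\<lambda>a b. if a = b then mat 1 else 0)"

definition bpow :: "nat \<Rightarrow> ('n::finite) bmat \<Rightarrow> nat \<Rightarrow> 'n bmat" where
  "bpow m A j = ((bmul m A) ^^ j) (bid m)"

definition btrace :: "nat \<Rightarrow> ('n::finite) bmat \<Rightarrow> complex" where
  "btrace m A = (\<Sum>a<m. trace (A a a))"

definition binvertible :: "nat \<Rightarrow> ('n::finite) bmat \<Rightarrow> bool" where
  "binvertible m A \<longleftrightarrow> (\<exists>B. (\<forall>a<m. \<forall>b<m. bmul m A B a b = bid m a b \<and> bmul m B A a b = bid m a b))"

definition bexp :: "nat \<Rightarrow> ('n::finite) bmat \<Rightarrow> 'n bmat" where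
  "bexp m A = (\<lambda>a b. \<Sum>j. (1 / fact j) *\<^sub>R bpow m A j a b)"

definition Xbig :: "nat \<Rightarrow> ('n::finite) point \<Rightarrow> 'n bmat" where
  "Xbig m p = (\<lambda>a b. if b = sucm m a then Xm p a else 0)"

definition Ybig :: "nat \<Rightarrow> ('n::finite) point \<Rightarrow> 'n bmat" where
  "Ybig m p = (\<lambda>a b. if a = sucm m b then Ym p b else 0)"

definition Zs :: "('n::finite) point \<Rightarrow> nat \<Rightarrow> complex^'n^'n" where
  "Zs p s = Ym p s + matrix_inv (Xm p s)"

definition Zbig :: "nat \<Rightarrow> ('n::finite) point \<Rightarrow> 'n bmat" where
  "Zbig m p = (\<lambda>a b. if a = sucm m b then Zs p b else 0)"

definition outer :: "complex^('n::finite) \<Rightarrow> complex^'n \<Rightarrow> complex^'n^'n" where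
  "outer w v = (\<chi> i j. w $ i * v $ j)"

definition Mbullet :: "nat \<Rightarrow> (nat \<Rightarrow> nat) \<Rightarrow> ('n::finite) point set" where
  "Mbullet m d = {p. \<forall>s<m.
      invertible (mat 1 + Xm p s ** Ym p s) \<and> invertible (mat 1 + Ym p s ** Xm p s) \<and>
      (\<forall>a<d s. invertible (mat 1 + outer (Wv p s a) (Vv p s a)) \<and>
               1 + rowcol (Vv p s a) (Wv p s a) \<noteq> 0)}"

definition Mcirc :: "nat \<Rightarrow> (nat \<Rightarrow> nat) \<Rightarrow> ('n::finite) point set" where
  "Mcirc m d = {p \<in> Mbullet m d. binvertible m (Xbig m p)}"

section \<open>The quasi-Poisson bracket on coordinate functions\<close>

text \<open>Order of constructors: X < Y < V < W. qbr0 gives the bracket for pairs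
  listed in the paper; qbr extends by antisymmetry.\<close>

fun crank :: "'n coord \<Rightarrow> nat" where
  "crank (CX _ _ _) = 0" | "crank (CY _ _ _) = 1" | "crank (CV _ _ _) = 2" | "crank (CW _ _ _) = 3"

fun qbr0 :: "nat \<Rightarrow> ('n::finite) coord \<Rightarrow> 'n coord \<Rightarrow> 'n point \<Rightarrow> complex" where
  "qbr0 m (CX r i j) (CX s k l) p =
     1/2 * dlt s (predm m r) * (Xm p (predm m r) ** Xm p r) $ k $ j * dlt i l
   - 1/2 * dlt s (sucm m r) * dlt k j * (Xm p r ** Xm p (sucm m r)) $ i $ l"
| "qbr0 m (CY r i j) (CY s k l) p =
     1/2 * dlt s (predm m r) * dlt k j * (Ym p r ** Ym p (predm m r)) $ i $ l
   - 1/2 * dlt s (sucm m r) * (Ym p (sucm m r) ** Ym p r) $ k $ j * dlt i l"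
| "qbr0 m (CX r i j) (CY s k l) p =
     dlt s r * (dlt k j * dlt i l + 1/2 * (Ym p r ** Xm p r) $ k $ j * dlt i l
                + 1/2 * dlt k j * (Xm p r ** Ym p r) $ i $ l)
   - 1/2 * dlt s (predm m r) * Xm p r $ k $ j * Ym p (predm m r) $ i $ l
   + 1/2 * dlt s (sucm m r) * Ym p (sucm m r) $ k $ j * Xm p r $ i $ l"
| "qbr0 m (CX r i j) (CW s a k) p =
     1/2 * dlt s (sucm m r) * dlt k j * (Xm p r *v Wv p (sucm m r) a) $ i
   - 1/2 * dlt r s * Xm p r $ k $ j * Wv p r a $ i"
| "qbr0 m (CX r i j) (CV s a l) p =
     1/2 * dlt r s * (Vv p r a v* Xm p r) $ j * dlt i l
   - 1/2 * dlt s (sucm m r) * Vv p (sucm m r) a $ j * Xm p r $ i $ l"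
| "qbr0 m (CY r i j) (CW s a k) p =
     1/2 * dlt r s * dlt k j * (Ym p r *v Wv p r a) $ i
   - 1/2 * dlt s (sucm m r) * Ym p r $ k $ j * Wv p (sucm m r) a $ i"
| "qbr0 m (CY r i j) (CV s a l) p =
     1/2 * dlt s (sucm m r) * (Vv p (sucm m r) a v* Ym p r) $ j * dlt i l
   - 1/2 * dlt r s * Vv p r a $ j * Ym p r $ i $ l"
| "qbr0 m (CV s a j) (CV r b l) p =
     - 1/2 * ord_sgn s r * Vv p s a $ j * Vv p r b $ l
     - 1/2 * dlt s r * ord_sgn a b * (Vv p r b $ j * Vv p s a $ l + Vv p s a $ j * Vv p r b $ l)"
| "qbr0 m (CW s a i) (CW r b k) p =
     - 1/2 * ord_sgn s r * Wv p r b $ k * Wv p s a $ i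
     - 1/2 * dlt s r * ord_sgn a b * (Wv p r b $ k * Wv p s a $ i + Wv p s a $ k * Wv p r b $ i)"
| "qbr0 m (CV s a j) (CW r b k) p =
     1/2 * ord_sgn s r * Wv p r b $ k * Vv p s a $ j
   + dlt s r * dlt a b * (dlt k j + 1/2 * Wv p r b $ k * Vv p s a $ j
                          + 1/2 * dlt k j * rowcol (Vv p s a) (Wv p r b))
   + 1/2 * dlt s r * ord_sgn a b * (dlt k j * rowcol (Vv p s a) (Wv p r b) + Wv p r b $ k * Vv p s a $ j)"
| "qbr0 m _ _ p = 0"

definition qbr :: "nat \<Rightarrow> ('n::finite) coord \<Rightarrow> 'n coord \<Rightarrow> 'n point \<Rightarrow> complex" where
  "qbr m c e p = (if crank c \<le> crank e then qbr0 m c e p else - qbr0 m e c p)"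

definition pderiv_coord :: "('n point \<Rightarrow> complex) \<Rightarrow> 'n point \<Rightarrow> 'n coord \<Rightarrow> complex" where
  "pderiv_coord F p c = deriv (\<lambda>z. F (p(c := z))) (p c)"

definition ham :: "nat \<Rightarrow> (nat \<Rightarrow> nat) \<Rightarrow> (('n::finite) point \<Rightarrow> complex) \<Rightarrow> 'n coord \<Rightarrow> 'n point \<Rightarrow> complex" where
  "ham m d F g p = (\<Sum>c\<in>coords m d. pderiv_coord F p c * qbr m c g p)"

definition Hk :: "nat \<Rightarrow> nat \<Rightarrow> ('n::finite) point \<Rightarrow> complex" where
  "Hk m k p = (1 / of_nat k) * btrace m (bpow m (Zbig m p) k)"

end

theory Submission
  imports Defs
begin

lemma mm_ent: "(A ** B) $ i $ j = (\<Sum>l\<in>UNIV. A $ i $ l * B $ l $ j)"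
  by (simp add: matrix_matrix_mult_def)

lemma sum_ent: "(\<Sum>x\<in>S. F x) $ i $ j = (\<Sum>x\<in>S. (F x :: 'a::comm_monoid_add^'n^'m) $ i $ j)"
  by (induction S rule: infinite_finite_induct) auto

lemma sum_mmult: "(\<Sum>x\<in>S. F x) ** (C::'a::comm_semiring_1^'n^'n) = (\<Sum>x\<in>S. F x ** C)"
  by (simp add: vec_eq_iff mm_ent sum_ent sum_distrib_right) (subst sum.swap, simp)

lemma mmult_sum: "(C::'a::comm_semiring_1^'n^'n) ** (\<Sum>x\<in>S. F x) = (\<Sum>x\<in>S. C ** F x)"
  by (simp add: vec_eq_iff mm_ent sum_ent sum_distrib_left) (subst sum.swap, simp)

lemma bmul_assoc: "bmul m (bmul m A B) C = bmul m A (bmul m B C)"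
  unfolding bmul_def
  by (simp add: sum_mmult mmult_sum matrix_mul_assoc) (subst sum.swap, simp)

lemma bpow_0: "bpow m A 0 = bid m" by (simp add: bpow_def)
lemma bpow_Suc: "bpow m A (Suc j) = bmul m A (bpow m A j)" by (simp add: bpow_def)

lemma bmul_bid_left: "a < m \<Longrightarrow> bmul m (bid m) A a b = A a b"
  by (simp add: bmul_def bid_def if_distrib[where f="\<lambda>x. x ** _"] cong: if_cong)

lemma bmul_bid_right: "b < m \<Longrightarrow> bmul m A (bid m) a b = A a b"
  by (simp add: bmul_def bid_def if_distrib[where f="\<lambda>x. _ ** x"] cong: if_cong)

lemma bmul_cong: "(\<And>c. c < m \<Longrightarrow> A a c = A' a c) \<Longrightarrow> (\<And>c. c < m \<Longrightarrow> B c b = B' c b)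
   \<Longrightarrow> bmul m A B a b = bmul m A' B' a b"
  unfolding bmul_def by (rule sum.cong) auto

lemma bpow_add: "a < m \<Longrightarrow> bmul m (bpow m A i) (bpow m A j) a b = bpow m A (i + j) a b"
proof (induction i arbitrary: a)
  case 0 then show ?case by (simp add: bpow_0 bmul_bid_left)
next
  case (Suc i)
  have "bmul m (bpow m A (Suc i)) (bpow m A j) a b = bmul m A (bmul m (bpow m A i) (bpow m A j)) a b"
    by (simp add: bpow_Suc bmul_assoc)
  also have "\<dots> = bmul m A (bpow m A (i + j)) a b"
    by (rule bmul_cong) (auto simp: Suc.IH)
  finally show ?case by (simp add: bpow_Suc)
qed

lemma bpow_Suc': "a < m \<Longrightarrow> b < m \<Longrightarrow> bpow m A (Suc j) a b = bmul m (bpow m A j) A a b"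
proof -
  assume a: "a < m" and b: "b < m"
  have "bpow m A (Suc j) a b = bmul m (bpow m A j) (bpow m A 1) a b"
    using bpow_add[OF a, of A j 1] by simp
  also have "\<dots> = bmul m (bpow m A j) A a b"
    by (rule bmul_cong) (auto simp: bpow_Suc bpow_0 bmul_bid_right b)
  finally show ?thesis .
qed

lemma bpow_cong: "(\<And>a b. a < m \<Longrightarrow> b < m \<Longrightarrow> A a b = A' a b) \<Longrightarrow> a < m \<Longrightarrow> b < m
   \<Longrightarrow> bpow m A j a b = bpow m A' j a b"
proof (induction j arbitrary: a b)
  case 0 then show ?case by (simp add: bpow_0)
next
  case (Suc j)
  show ?case unfolding bpow_Suc
    by (rule bmul_cong) (simp_all add: Suc.prems Suc.IH)
qed

lemma trace_sum: "trace (\<Sum>x\<in>S. F x) = (\<Sum>x\<in>S. trace (F x :: 'a::comm_semiring_1^'n^'n))"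
  by (simp add: trace_def sum_ent) (subst sum.swap, simp)

lemma btrace_comm: "btrace m (bmul m A B) = btrace m (bmul m B A)"
  unfolding btrace_def bmul_def
  apply (simp add: trace_sum)
  apply (subst sum.swap)
  apply (rule sum.cong, simp)+
  apply (rule trace_mul_sym)
  done

definition mpow :: "complex^'n^'n \<Rightarrow> nat \<Rightarrow> complex^('n::finite)^'n" where
  "mpow A j = (((**) A) ^^ j) (mat 1)"

lemma mpow_0[simp]: "mpow A 0 = mat 1" by (simp add: mpow_def)
lemma mpow_Suc: "mpow A (Suc j) = A ** mpow A j" by (simp add: mpow_def)
lemma mpow_Suc': "mpow A (Suc j) = mpow A j ** A"
  by (induction j) (simp_all add: mpow_Suc matrix_mul_assoc)

definition l1 :: "complex^('n::finite)^'n \<Rightarrow> real" where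
  "l1 M = (\<Sum>i\<in>UNIV. \<Sum>j\<in>UNIV. cmod (M $ i $ j))"

lemma ent_le_l1: "cmod (M $ i $ j) \<le> l1 M"
proof -
  have "cmod (M $ i $ j) \<le> (\<Sum>j\<in>UNIV. cmod (M $ i $ j))"
    by (rule member_le_sum) auto
  also have "\<dots> \<le> l1 M" unfolding l1_def
    by (rule member_le_sum) (auto intro: sum_nonneg)
  finally show ?thesis .
qed

lemma l1_mult: "l1 (A ** B) \<le> l1 A * l1 B"
proof -
  have "l1 (A ** B) \<le> (\<Sum>i\<in>UNIV. \<Sum>j\<in>UNIV. \<Sum>l\<in>UNIV. cmod (A$i$l) * cmod (B$l$j))"
    unfolding l1_def mm_ent
    by (intro sum_mono order.trans[OF norm_sum]) (simp add: norm_mult)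
  also have "\<dots> = (\<Sum>i\<in>UNIV. \<Sum>l\<in>UNIV. cmod (A$i$l) * (\<Sum>j\<in>UNIV. cmod (B$l$j)))"
    by (simp add: sum_distrib_left, subst sum.swap, simp)
  also have "\<dots> \<le> (\<Sum>i\<in>UNIV. \<Sum>l\<in>UNIV. cmod (A$i$l) * l1 B)"
  proof (intro sum_mono mult_left_mono)
    fix l show "(\<Sum>j\<in>UNIV. cmod (B$l$j)) \<le> l1 B" unfolding l1_def
      by (rule member_le_sum) (auto intro: sum_nonneg)
  qed auto
  also have "\<dots> = l1 A * l1 B" by (simp add: l1_def sum_distrib_right)
  finally show ?thesis .
qed

lemma l1_nonneg: "0 \<le> l1 M" unfolding l1_def by (simp add: sum_nonneg)

lemma l1_mpow: "l1 (mpow A j :: complex^('n::finite)^'n) \<le> real CARD('n) * l1 A ^ j"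
proof (induction j)
  case 0
  have "l1 (mat 1 :: complex^'n^'n) = (\<Sum>i\<in>(UNIV::'n set). 1)"
    unfolding l1_def by (intro sum.cong refl) (simp add: mat_def if_distrib[of cmod] cong: if_cong)
  then show ?case by simp
next
  case (Suc j)
  have "l1 (mpow A (Suc j)) \<le> l1 A * l1 (mpow A j)" unfolding mpow_Suc by (rule l1_mult)
  also have "\<dots> \<le> l1 A * (real CARD('n) * l1 A ^ j)"
    by (rule mult_left_mono[OF Suc.IH l1_nonneg])
  finally show ?case by (simp add: algebra_simps)
qed

definition cf :: "complex^('n::finite)^'n \<Rightarrow> 'n \<Rightarrow> 'n \<Rightarrow> nat \<Rightarrow> complex" where
  "cf A a b j = mpow A j $ a $ b / of_real (fact j)"

lemma cf_summable: "summable (\<lambda>j. cf (A::complex^('n::finite)^'n) a b j * u ^ j)"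
proof (rule summable_comparison_test')
  show "summable (\<lambda>j. real CARD('n) * (inverse (fact j) * (l1 A * cmod u) ^ j))"
    by (intro summable_mult summable_exp)
  fix j :: nat
  have "norm (cf A a b j * u ^ j) = cmod (mpow A j $ a $ b) / fact j * cmod u ^ j"
    by (simp add: cf_def norm_mult norm_divide norm_power)
  also have "\<dots> \<le> (real CARD('n) * l1 A ^ j) / fact j * cmod u ^ j"
    by (intro mult_right_mono divide_right_mono order.trans[OF ent_le_l1 l1_mpow]) auto
  also have "\<dots> = real CARD('n) * (inverse (fact j) * (l1 A * cmod u) ^ j)"
    by (simp add: field_simps power_mult_distrib)
  finally show "norm (cf A a b j * u ^ j) \<le> real CARD('n) * (inverse (fact j) * (l1 A * cmod u) ^ j)" .
qed

lemma mat_sums: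
  fixes v :: "nat \<Rightarrow> 'a::real_normed_vector^'n^'m"
  assumes "\<And>a b. (\<lambda>j. v j $ a $ b) sums s a b"
  shows "v sums (\<chi> a b. s a b)"
  unfolding sums_def
proof (rule vec_tendstoI)
  fix a
  show "((\<lambda>n. (\<Sum>j<n. v j) $ a) \<longlongrightarrow> (\<chi> a b. s a b) $ a) sequentially"
  proof (rule vec_tendstoI)
    fix b
    show "((\<lambda>n. (\<Sum>j<n. v j) $ a $ b) \<longlongrightarrow> (\<chi> a b. s a b) $ a $ b) sequentially"
      using assms[of a b] by (simp add: sums_def sum_ent)
  qed
qed

definition EF :: "complex^('n::finite)^'n \<Rightarrow> real \<Rightarrow> complex^'n^'n" where
  "EF A t = (\<Sum>j. (1 / fact j) *\<^sub>R ((-t)^j *\<^sub>R mpow A j))"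

lemma EF_ent: "EF A t $ a $ b = (\<Sum>j. cf A a b j * of_real (-t) ^ j)"
proof -
  have e: "((1 / fact j) *\<^sub>R ((-t)^j *\<^sub>R mpow A j)) $ a' $ b' = cf A a' b' j * of_real (-t) ^ j"
    for j a' b' by (simp only: vector_scaleR_component) (simp add: cf_def scaleR_conv_of_real field_simps)
  have "(\<lambda>j. (1 / fact j) *\<^sub>R ((-t)^j *\<^sub>R mpow A j)) sums (\<chi> a b. \<Sum>j. cf A a b j * of_real (-t) ^ j)"
    by (rule mat_sums) (simp only: e, rule summable_sums, rule cf_summable)
  then show ?thesis unfolding EF_def by (simp add: sums_iff)
qed

lemma EF_0: "EF A 0 = mat 1"
  by (simp add: vec_eq_iff EF_ent) (simp add: cf_def)

lemma sum_suminf_swap: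
  fixes h :: "'i \<Rightarrow> nat \<Rightarrow> complex"
  assumes "finite I" "\<And>l. l \<in> I \<Longrightarrow> summable (h l)"
  shows "(\<Sum>l\<in>I. x l * (\<Sum>j. h l j)) = (\<Sum>j. \<Sum>l\<in>I. x l * h l j)"
proof -
  have "(\<Sum>l\<in>I. x l * (\<Sum>j. h l j)) = (\<Sum>l\<in>I. \<Sum>j. x l * h l j)"
    by (intro sum.cong refl suminf_mult[symmetric] assms)
  also have "\<dots> = (\<Sum>j. \<Sum>l\<in>I. x l * h l j)"
    by (rule suminf_sum[symmetric]) (intro summable_mult assms)
  finally show ?thesis .
qed

lemma sum_suminf_swap2:
  fixes h :: "'i \<Rightarrow> nat \<Rightarrow> complex"
  assumes "finite I" "\<And>l. l \<in> I \<Longrightarrow> summable (h l)"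
  shows "(\<Sum>l\<in>I. (\<Sum>j. h l j) * x l) = (\<Sum>j. \<Sum>l\<in>I. h l j * x l)"
proof -
  have "(\<Sum>l\<in>I. (\<Sum>j. h l j) * x l) = (\<Sum>l\<in>I. \<Sum>j. h l j * x l)"
    by (intro sum.cong refl suminf_mult2 assms)
  also have "\<dots> = (\<Sum>j. \<Sum>l\<in>I. h l j * x l)"
    by (rule suminf_sum[symmetric]) (intro summable_mult2 assms)
  finally show ?thesis .
qed

lemma EF_mult_right: "(EF A t ** M) $ a $ b = (\<Sum>j. (mpow A j ** M) $ a $ b / of_real (fact j) * of_real (-t) ^ j)"
proof -
  have "(EF A t ** M) $ a $ b = (\<Sum>l\<in>UNIV. (\<Sum>j. cf A a l j * of_real (-t) ^ j) * M$l$b)"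
    by (simp add: mm_ent EF_ent)
  also have "\<dots> = (\<Sum>j. \<Sum>l\<in>UNIV. cf A a l j * of_real (-t) ^ j * M$l$b)"
    by (rule sum_suminf_swap2) (auto simp: cf_summable)
  also have "\<dots> = (\<Sum>j. (mpow A j ** M) $ a $ b / of_real (fact j) * of_real (-t) ^ j)"
    apply (intro suminf_cong)
    apply (simp add: cf_def mm_ent sum_distrib_right sum_divide_distrib sum_distrib_left)
    apply (rule sum.cong, simp, simp add: field_simps)
    done
  finally show ?thesis .
qed

lemma EF_mult_left: "(M ** EF A t) $ a $ b = (\<Sum>j. (M ** mpow A j) $ a $ b / of_real (fact j) * of_real (-t) ^ j)"
proof -
  have "(M ** EF A t) $ a $ b = (\<Sum>l\<in>UNIV. M$a$l * (\<Sum>j. cf A l b j * of_real (-t) ^ j))"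
    by (simp add: mm_ent EF_ent)
  also have "\<dots> = (\<Sum>j. \<Sum>l\<in>UNIV. M$a$l * (cf A l b j * of_real (-t) ^ j))"
    by (rule sum_suminf_swap) (auto simp: cf_summable)
  also have "\<dots> = (\<Sum>j. (M ** mpow A j) $ a $ b / of_real (fact j) * of_real (-t) ^ j)"
    apply (intro suminf_cong)
    apply (simp add: cf_def mm_ent sum_distrib_right sum_divide_distrib sum_distrib_left)
    apply (rule sum.cong, simp, simp add: field_simps)
    done
  finally show ?thesis .
qed

lemma mpow_comm: "A ** mpow A j = mpow A j ** A"
  by (metis mpow_Suc mpow_Suc')

lemma EF_comm: "EF A t ** A = A ** EF A t"
  by (simp add: vec_eq_iff EF_mult_right EF_mult_left mpow_comm)

lemma EF_deriv: "((\<lambda>t. EF A t $ a $ b) has_vector_derivative (- (EF A t ** A) $ a $ b)) (at t)"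
proof -
  define f where "f u = (\<Sum>j. cf A a b j * u ^ j)" for u
  define f' where "f' u = (\<Sum>j. diffs (cf A a b) j * u ^ j)" for u
  have fd: "(f has_field_derivative f' u) (at u)" for u
    unfolding f_def f'_def by (rule termdiffs_strong_converges_everywhere) (rule cf_summable)
  have "((\<lambda>u. f (- u)) has_field_derivative f' (- u) * (- 1)) (at u)" for u
    by (rule DERIV_chain2[OF fd]) (auto intro!: derivative_eq_intros)
  then have "((\<lambda>x. f (- of_real x)) has_vector_derivative f' (- of_real t) * (- 1)) (at t)"
    by (rule has_vector_derivative_real_field)
  moreover have "f' (- of_real t) = (EF A t ** A) $ a $ b"
    unfolding f'_def EF_mult_right diffs_def cf_def
    by (intro suminf_cong) (simp add: mpow_Suc' del: of_nat_Suc)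
  ultimately show ?thesis by (simp add: f_def EF_ent)
qed

lemma EF_inv: "EF A t ** EF A (-t) = mat 1"
proof -
  have dm: "((\<lambda>t. EF A (-t) $ l $ b) has_vector_derivative (EF A (-t) ** A) $ l $ b) (at t)" for t l b
  proof -
    have "(((\<lambda>t. EF A t $ l $ b) \<circ> (\<lambda>t. -t)) has_vector_derivative (- 1) *\<^sub>R (- (EF A (-t) ** A) $ l $ b)) (at t)"
      by (rule vector_diff_chain_at) (auto intro!: derivative_eq_intros EF_deriv)
    then show ?thesis by (simp add: o_def)
  qed
  have "\<exists>c. \<forall>t. (EF A t ** EF A (-t)) $ a $ b = c" for a b
  proof -
    have "((\<lambda>t. (EF A t ** EF A (-t)) $ a $ b) has_vector_derivative 0) (at t within UNIV)" for t
    proof -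
      have "((\<lambda>t. \<Sum>l\<in>UNIV. EF A t $ a $ l * EF A (-t) $ l $ b) has_vector_derivative
          (\<Sum>l\<in>UNIV. EF A t $ a $ l * (EF A (-t) ** A) $ l $ b + (- (EF A t ** A) $ a $ l) * EF A (-t) $ l $ b)) (at t)"
        by (intro has_vector_derivative_sum has_vector_derivative_mult EF_deriv dm)
      moreover have "(\<Sum>l\<in>UNIV. EF A t $ a $ l * (EF A (-t) ** A) $ l $ b + (- (EF A t ** A) $ a $ l) * EF A (-t) $ l $ b) = 0"
      proof -
        have "(\<Sum>l\<in>UNIV. EF A t $ a $ l * (EF A (-t) ** A) $ l $ b + (- (EF A t ** A) $ a $ l) * EF A (-t) $ l $ b)
          = (EF A t ** (EF A (-t) ** A)) $ a $ b - ((EF A t ** A) ** EF A (-t)) $ a $ b"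
          by (simp add: mm_ent sum.distrib sum_subtractf)
        also have "\<dots> = 0" by (simp add: EF_comm matrix_mul_assoc)
        finally show ?thesis .
      qed
      ultimately show ?thesis unfolding mm_ent by simp
    qed
    then obtain c where "\<And>t. t \<in> UNIV \<Longrightarrow> (EF A t ** EF A (-t)) $ a $ b = c"
      by (rule has_vector_derivative_zero_constant[OF convex_UNIV]) blast
    then show ?thesis by blast
  qed
  then have "(EF A t ** EF A (-t)) $ a $ b = (EF A 0 ** EF A (-0)) $ a $ b" for a b by metis
  then show ?thesis by (simp add: vec_eq_iff EF_0)
qed

lemma sucm_lt: "0 < m \<Longrightarrow> sucm m r < m" by (simp add: sucm_def)
lemma predm_lt: "0 < m \<Longrightarrow> predm m r < m" by (simp add: predm_def)

lemma predm_sucm: "r < m \<Longrightarrow> predm m (sucm m r) = r"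
proof -
  assume r: "r < m"
  show ?thesis
  proof (cases "r + 1 < m")
    case True
    then have "sucm m r = r + 1" by (simp add: sucm_def)
    then show ?thesis using r by (simp add: predm_def)
  next
    case False
    then have "r + 1 = m" using r by simp
    then have "sucm m r = 0" by (simp add: sucm_def)
    then show ?thesis using r \<open>r + 1 = m\<close> by (simp add: predm_def)
  qed
qed

lemma sucm_predm: "r < m \<Longrightarrow> sucm m (predm m r) = r"
proof -
  assume r: "r < m"
  show ?thesis
  proof (cases "r = 0")
    case True
    then have "predm m r = m - 1" using r by (simp add: predm_def)
    then show ?thesis using r True by (simp add: sucm_def)
  next
    case False
    then have "predm m r = r - 1" using r
      by (simp add: predm_def) (metis add_diff_assoc2 add.commute less_imp_diff_less mod_add_self2 mod_less One_nat_def Suc_leI neq0_conv)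
    then show ?thesis using r False by (simp add: sucm_def)
  qed
qed

lemma sucm_inj: "r < m \<Longrightarrow> s < m \<Longrightarrow> sucm m r = sucm m s \<longleftrightarrow> r = s"
  by (metis predm_sucm)

lemma eq_predm_iff: "r < m \<Longrightarrow> s < m \<Longrightarrow> (s = predm m r) \<longleftrightarrow> (r = sucm m s)"
  by (metis predm_sucm sucm_predm)

lemma eq_sucm_iff: "r < m \<Longrightarrow> s < m \<Longrightarrow> (s = sucm m r) \<longleftrightarrow> (r = predm m s)"
  by (metis predm_sucm sucm_predm)

lemma sum_single: "(s::nat) < m \<Longrightarrow> (\<And>c. c < m \<Longrightarrow> c \<noteq> s \<Longrightarrow> f c = 0) \<Longrightarrow> (\<Sum>c<m. f c) = f s"
proof -
  assume s: "s < m" and z: "\<And>c. c < m \<Longrightarrow> c \<noteq> s \<Longrightarrow> f c = 0"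
  have "(\<Sum>c<m. f c) = (\<Sum>c<m. if c = s then f s else 0)"
    by (rule sum.cong) (auto simp: z)
  also have "\<dots> = f s" using s by (subst sum.delta) auto
  finally show ?thesis .
qed

lemma zpow_shift: "0 < m \<Longrightarrow> a < m \<Longrightarrow> b < m \<Longrightarrow> a \<noteq> (b + j) mod m \<Longrightarrow> bpow m (Zbig m p) j a b = 0"
proof (induction j arbitrary: a)
  case 0 then show ?case by (simp add: bpow_0 bid_def)
next
  case (Suc j)
  have "(\<Sum>c<m. Zbig m p a c ** bpow m (Zbig m p) j c b) = (\<Sum>c<m. 0)"
  proof (rule sum.cong)
    fix c assume c: "c \<in> {..<m}"
    show "Zbig m p a c ** bpow m (Zbig m p) j c b = 0"
    proof (cases "a = sucm m c")
      case True
      have "c \<noteq> (b + j) mod m"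
      proof
        assume "c = (b + j) mod m"
        then have "a = ((b + j) mod m + 1) mod m" using True by (simp add: sucm_def)
        also have "\<dots> = (b + Suc j) mod m" by (simp add: mod_Suc_eq)
        finally show False using Suc.prems by simp
      qed
      then show ?thesis using Suc.IH[of c] Suc.prems c by simp
    qed (simp add: Zbig_def)
  qed simp
  then show ?case by (simp add: bpow_Suc bmul_def)
qed

lemma zpow_k: "0 < m \<Longrightarrow> Suc q mod m = 0 \<Longrightarrow> a < m \<Longrightarrow> b < m \<Longrightarrow> a \<noteq> b \<Longrightarrow> bpow m (Zbig m p) (Suc q) a b = 0"
proof (rule zpow_shift)
  assume "Suc q mod m = 0" "b < m" "a \<noteq> b"
  have "(b + Suc q) mod m = (b + Suc q mod m) mod m" by (rule mod_add_right_eq[symmetric])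
  then show "a \<noteq> (b + Suc q) mod m" using \<open>Suc q mod m = 0\<close> \<open>b < m\<close> \<open>a \<noteq> b\<close> by simp
qed

lemma zpow_km1: "0 < m \<Longrightarrow> Suc q mod m = 0 \<Longrightarrow> a < m \<Longrightarrow> b < m \<Longrightarrow> b \<noteq> sucm m a \<Longrightarrow> bpow m (Zbig m p) q a b = 0"
proof (rule zpow_shift)
  assume "0 < m" "Suc q mod m = 0" "b < m" "b \<noteq> sucm m a"
  show "a \<noteq> (b + q) mod m"
  proof
    assume "a = (b + q) mod m"
    then have "sucm m a = ((b + q) mod m + 1) mod m" by (simp add: sucm_def)
    also have "\<dots> = (b + Suc q) mod m" by (simp add: mod_Suc_eq)
    also have "\<dots> = (b + Suc q mod m) mod m" by (rule mod_add_right_eq[symmetric])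
    also have "\<dots> = b" using \<open>Suc q mod m = 0\<close> \<open>b < m\<close> by simp
    finally show False using \<open>b \<noteq> sucm m a\<close> by simp
  qed
qed

definition Gb :: "nat \<Rightarrow> nat \<Rightarrow> ('n::finite) point \<Rightarrow> nat \<Rightarrow> complex^'n^'n" where
  "Gb m q p a = bpow m (Zbig m p) q a (sucm m a)"
definition Pb :: "nat \<Rightarrow> nat \<Rightarrow> ('n::finite) point \<Rightarrow> nat \<Rightarrow> complex^'n^'n" where
  "Pb m q p a = bpow m (Zbig m p) (Suc q) a a"

lemma Pb_suc: "0 < m \<Longrightarrow> s < m \<Longrightarrow> Pb m q p (sucm m s) = Zs p s ** Gb m q p s"
proof -
  assume m: "0 < m" and s: "s < m"
  have "Pb m q p (sucm m s) = (\<Sum>c<m. Zbig m p (sucm m s) c ** bpow m (Zbig m p) q c (sucm m s))"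
    by (simp add: Pb_def bpow_Suc bmul_def)
  also have "\<dots> = Zbig m p (sucm m s) s ** bpow m (Zbig m p) q s (sucm m s)"
    by (rule sum_single[OF s]) (simp add: Zbig_def sucm_inj s)
  finally show ?thesis by (simp add: Zbig_def Gb_def)
qed

lemma Pb_self: "0 < m \<Longrightarrow> s < m \<Longrightarrow> Pb m q p s = Gb m q p s ** Zs p s"
proof -
  assume m: "0 < m" and s: "s < m"
  have "Pb m q p s = (\<Sum>c<m. bpow m (Zbig m p) q s c ** Zbig m p c s)"
    by (simp add: Pb_def bpow_Suc'[OF s s] bmul_def)
  also have "\<dots> = bpow m (Zbig m p) q s (sucm m s) ** Zbig m p (sucm m s) s"
    by (rule sum_single[OF sucm_lt[OF m]]) (simp add: Zbig_def)
  finally show ?thesis by (simp add: Zbig_def Gb_def)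
qed

section \<open>Derivatives of traces of powers\<close>

lemma bmul_sum_right: "bmul m A (\<lambda>a b. \<Sum>l\<in>S. F l a b) a b = (\<Sum>l\<in>S. bmul m A (F l) a b)"
  by (simp add: bmul_def mmult_sum, rule sum.swap)

definition Dp :: "nat \<Rightarrow> ('n::finite) bmat \<Rightarrow> 'n bmat \<Rightarrow> nat \<Rightarrow> 'n bmat" where
  "Dp m B B' j = (\<lambda>a b. \<Sum>l<j. bmul m (bpow m B l) (bmul m B' (bpow m B (j - 1 - l))) a b)"

lemma Dp_Suc: "a < m \<Longrightarrow> Dp m B B' (Suc j) a b = bmul m B' (bpow m B j) a b + bmul m B (Dp m B B' j) a b"
proof -
  assume a: "a < m"
  have "Dp m B B' (Suc j) a b = bmul m (bpow m B 0) (bmul m B' (bpow m B j)) a b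
     + (\<Sum>l<j. bmul m (bpow m B (Suc l)) (bmul m B' (bpow m B (j - 1 - l))) a b)"
    unfolding Dp_def by (subst sum.lessThan_Suc_shift) simp
  also have "(\<Sum>l<j. bmul m (bpow m B (Suc l)) (bmul m B' (bpow m B (j - 1 - l))) a b) = bmul m B (Dp m B B' j) a b"
    by (simp add: Dp_def bmul_sum_right bpow_Suc bmul_assoc)
  finally show ?thesis using a by (simp add: bpow_0 bmul_bid_left)
qed

lemma bpow_deriv:
  assumes d: "\<And>a b i j. a < m \<Longrightarrow> b < m \<Longrightarrow> ((\<lambda>z. B z a b $ i $ j) has_field_derivative B' a b $ i $ j) (at z0)"
  shows "a < m \<Longrightarrow> b < m \<Longrightarrow> ((\<lambda>z. bpow m (B z) n a b $ i $ j) has_field_derivative Dp m (B z0) B' n a b $ i $ j) (at z0)"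
proof (induction n arbitrary: a b i j)
  case 0 then show ?case by (simp add: bpow_0 Dp_def)
next
  case (Suc n)
  have "((\<lambda>z. \<Sum>c<m. \<Sum>l\<in>UNIV. B z a c $ i $ l * bpow m (B z) n c b $ l $ j) has_field_derivative
     (\<Sum>c<m. \<Sum>l\<in>UNIV. B' a c $ i $ l * bpow m (B z0) n c b $ l $ j + Dp m (B z0) B' n c b $ l $ j * B z0 a c $ i $ l)) (at z0)"
    using Suc by (intro DERIV_sum DERIV_mult d) auto
  moreover have "(\<Sum>c<m. \<Sum>l\<in>UNIV. B' a c $ i $ l * bpow m (B z0) n c b $ l $ j + Dp m (B z0) B' n c b $ l $ j * B z0 a c $ i $ l)
      = Dp m (B z0) B' (Suc n) a b $ i $ j"
    using Suc.prems by (simp add: Dp_Suc bmul_def sum_ent mm_ent sum.distrib mult.commute)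
  ultimately show ?case by (simp add: bpow_Suc bmul_def sum_ent mm_ent)
qed

lemma btrace_sum: "btrace m (\<lambda>a b. \<Sum>l\<in>S. F l a b) = (\<Sum>l\<in>S. btrace m (F l))"
  by (simp add: btrace_def trace_sum) (rule sum.swap)

lemma btrace_cong: "(\<And>a. a < m \<Longrightarrow> A a a = A' a a) \<Longrightarrow> btrace m A = btrace m A'"
  unfolding btrace_def by (rule sum.cong) auto

lemma btrace_Dp: "btrace m (Dp m B B' (Suc q)) = of_nat (Suc q) * btrace m (bmul m (bpow m B q) B')"
proof -
  have "btrace m (bmul m (bpow m B l) (bmul m B' (bpow m B (q - l)))) = btrace m (bmul m (bpow m B q) B')"
    if l: "l < Suc q" for l
  proof -
    have "btrace m (bmul m (bpow m B l) (bmul m B' (bpow m B (q - l))))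
        = btrace m (bmul m B' (bmul m (bpow m B (q - l)) (bpow m B l)))"
      by (simp add: btrace_comm[of m "bpow m B l"] bmul_assoc)
    also have "\<dots> = btrace m (bmul m B' (bpow m B q))"
    proof (rule btrace_cong, rule bmul_cong)
      fix a c assume "c < m"
      then show "bmul m (bpow m B (q - l)) (bpow m B l) c a = bpow m B q c a"
        using l by (simp add: bpow_add)
    qed simp
    also have "\<dots> = btrace m (bmul m (bpow m B q) B')" by (rule btrace_comm)
    finally show ?thesis .
  qed
  then have "(\<Sum>l<Suc q. btrace m (bmul m (bpow m B l) (bmul m B' (bpow m B (q - l)))))
     = (\<Sum>l<Suc q. btrace m (bmul m (bpow m B q) B'))"
    by (intro sum.cong) auto
  moreover have "btrace m (Dp m B B' (Suc q)) = (\<Sum>l<Suc q. btrace m (bmul m (bpow m B l) (bmul m B' (bpow m B (q - l)))))"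
    unfolding Dp_def btrace_sum by (simp del: sum.lessThan_Suc)
  ultimately show ?thesis by simp
qed

lemma trace_pow_deriv:
  assumes d: "\<And>a b i j. a < m \<Longrightarrow> b < m \<Longrightarrow> ((\<lambda>z. B z a b $ i $ j) has_field_derivative B' a b $ i $ j) (at z0)"
  shows "((\<lambda>z. btrace m (bpow m (B z) (Suc q))) has_field_derivative
           of_nat (Suc q) * btrace m (bmul m (bpow m (B z0) q) B')) (at z0)"
proof -
  have "((\<lambda>z. \<Sum>a<m. \<Sum>i\<in>UNIV. bpow m (B z) (Suc q) a a $ i $ i) has_field_derivative
      (\<Sum>a<m. \<Sum>i\<in>UNIV. Dp m (B z0) B' (Suc q) a a $ i $ i)) (at z0)"
    by (intro DERIV_sum bpow_deriv[OF d]) auto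
  moreover have "(\<Sum>a<m. \<Sum>i\<in>UNIV. Dp m (B z0) B' (Suc q) a a $ i $ i)
     = of_nat (Suc q) * btrace m (bmul m (bpow m (B z0) q) B')"
    using btrace_Dp[of m "B z0" B' q] unfolding btrace_def trace_def .
  ultimately show ?thesis unfolding btrace_def trace_def by simp
qed

lemma btrace_single: "r < m \<Longrightarrow> 0 < m \<Longrightarrow>
  btrace m (bmul m A (\<lambda>a b. if a = sucm m b \<and> b = r then M else 0)) = trace (A r (sucm m r) ** M)"
proof -
  assume r: "r < m" and m: "0 < m"
  have "(\<Sum>c<m. A a c ** (if c = sucm m a \<and> a = r then M else 0)) = (if a = r then A r (sucm m r) ** M else 0)"
    if "a < m" for a
  proof (cases "a = r")
    case True
    have "(\<Sum>c<m. A a c ** (if c = sucm m a \<and> a = r then M else 0)) = A a (sucm m a) ** M"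
      by (rule trans[OF sum_single[OF sucm_lt[OF m]]]) (auto simp: True)
    then show ?thesis using True by simp
  qed simp
  then have "btrace m (bmul m A (\<lambda>a b. if a = sucm m b \<and> b = r then M else 0))
      = (\<Sum>a<m. trace (if a = r then A r (sucm m r) ** M else 0))"
    unfolding btrace_def bmul_def by (intro sum.cong refl) simp
  also have "\<dots> = trace (A r (sucm m r) ** M)"
    by (rule trans[OF sum_single[OF r]]) (auto simp: trace_def)
  finally show ?thesis .
qed

lemma matrix_inv_props:
  fixes A :: "complex^'n::finite^'n"
  assumes "invertible A"
  shows "A ** matrix_inv A = mat 1" "matrix_inv A ** A = mat 1"
proof -
  have "\<exists>A'. A ** A' = mat 1 \<and> A' ** A = mat 1" using assms by (simp add: invertible_def)
  then have "A ** matrix_inv A = mat 1 \<and> matrix_inv A ** A = mat 1"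
    unfolding matrix_inv_def by (rule someI_ex)
  then show "A ** matrix_inv A = mat 1" "matrix_inv A ** A = mat 1" by auto
qed

lemma matrix_inv_eq:
  fixes A N :: "complex^'n::finite^'n"
  assumes "A ** N = mat 1"
  shows "matrix_inv A = N" "invertible A"
proof -
  have NA: "N ** A = mat 1" using assms matrix_left_right_inverse by blast
  show inv: "invertible A" unfolding invertible_def using assms NA by blast
  have "matrix_inv A = (N ** A) ** matrix_inv A" by (simp add: NA)
  also have "\<dots> = N ** (A ** matrix_inv A)" by (simp add: matrix_mul_assoc)
  also have "\<dots> = N" by (simp add: matrix_inv_props[OF inv])
  finally show "matrix_inv A = N" .
qed

lemma SM:
  fixes A :: "complex^'n::finite^'n"
  assumes inv: "invertible A" and nz: "1 + w * matrix_inv A $ j $ i \<noteq> 0"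
  shows "matrix_inv (\<chi> x y. if x = i \<and> y = j then A $ i $ j + w else A $ x $ y) =
    (\<chi> a b. matrix_inv A $ a $ b - w / (1 + w * matrix_inv A $ j $ i) * (matrix_inv A $ a $ i * matrix_inv A $ j $ b))"
proof (rule matrix_inv_eq(1))
  define Ai where "Ai = matrix_inv A"
  define c where "c = w / (1 + w * Ai $ j $ i)"
  have cw: "c * (1 + w * Ai $ j $ i) = w" using nz by (simp add: c_def Ai_def)
  have e1: "(\<Sum>l\<in>UNIV. A $ a $ l * Ai $ l $ b) = (if a = b then 1 else 0)" for a b
    using arg_cong[OF matrix_inv_props(1)[OF inv], of "\<lambda>M. M $ a $ b"]
    by (simp add: mm_ent Ai_def mat_def)
  have A': "(\<chi> x y. if x = i \<and> y = j then A $ i $ j + w else A $ x $ y) = (\<chi> x y. A $ x $ y + (if x = i \<and> y = j then w else 0))"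
    by (simp add: vec_eq_iff)
  show "(\<chi> x y. if x = i \<and> y = j then A $ i $ j + w else A $ x $ y) **
      (\<chi> a b. matrix_inv A $ a $ b - w / (1 + w * matrix_inv A $ j $ i) * (matrix_inv A $ a $ i * matrix_inv A $ j $ b)) = mat 1"
    unfolding A' Ai_def[symmetric] c_def[symmetric]
  proof (simp add: vec_eq_iff mm_ent, intro allI)
    fix a b
    have s1: "(\<Sum>l\<in>UNIV. (A $ a $ l + (if a = i \<and> l = j then w else 0)) * X l)
       = (\<Sum>l\<in>UNIV. A $ a $ l * X l) + (if a = i then w * X j else 0)" for X :: "'n \<Rightarrow> complex"
    proof -
      have "(\<Sum>l\<in>UNIV. (if a = i \<and> l = j then w else 0) * X l) = (\<Sum>l\<in>UNIV. if l = j then (if a = i then w * X j else 0) else 0)"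
        by (rule sum.cong) auto
      then show ?thesis by (simp add: distrib_right sum.distrib)
    qed
    have s2: "(\<Sum>l\<in>UNIV. A $ a $ l * (Ai $ l $ b - c * (Ai $ l $ i * Ai $ j $ b)))
       = (\<Sum>l\<in>UNIV. A $ a $ l * Ai $ l $ b) - c * (\<Sum>l\<in>UNIV. A $ a $ l * Ai $ l $ i) * Ai $ j $ b"
      by (simp add: right_diff_distrib sum_subtractf sum_distrib_left sum_distrib_right mult_ac)
    have "(\<Sum>l\<in>UNIV. (A $ a $ l + (if a = i \<and> l = j then w else 0)) * (Ai $ l $ b - c * (Ai $ l $ i * Ai $ j $ b)))
      = (\<Sum>l\<in>UNIV. A $ a $ l * Ai $ l $ b) - c * (\<Sum>l\<in>UNIV. A $ a $ l * Ai $ l $ i) * Ai $ j $ b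
        + (if a = i then w * (Ai $ j $ b - c * (Ai $ j $ i * Ai $ j $ b)) else 0)"
      by (simp only: s1 s2)
    also have "\<dots> = mat 1 $ a $ b"
    proof -
      have cw2: "w - c * w * Ai $ j $ i = c"
        using cw by (simp add: diff_eq_eq algebra_simps)
      have "w * (Ai $ j $ b - c * (Ai $ j $ i * Ai $ j $ b)) = (w - c * w * Ai $ j $ i) * Ai $ j $ b"
        by (simp add: algebra_simps)
      then have k: "w * (Ai $ j $ b - c * (Ai $ j $ i * Ai $ j $ b)) = c * Ai $ j $ b" by (simp only: cw2)
      show ?thesis by (simp add: e1 mat_def k)
    qed
    finally show "(\<Sum>l\<in>UNIV. (A $ a $ l + (if a = i \<and> l = j then w else 0)) * (Ai $ l $ b - c * (Ai $ l $ i * Ai $ j $ b))) = mat 1 $ a $ b" .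
  qed
qed

lemma Xm_upd_V: "Xm (p(CV s a j := z)) = Xm p" by (rule ext) (simp add: Xm_def)
lemma Ym_upd_V: "Ym (p(CV s a j := z)) = Ym p" by (rule ext) (simp add: Ym_def)
lemma Xm_upd_W: "Xm (p(CW s a j := z)) = Xm p" by (rule ext) (simp add: Xm_def)
lemma Ym_upd_W: "Ym (p(CW s a j := z)) = Ym p" by (rule ext) (simp add: Ym_def)
lemma Xm_upd_Y: "Xm (p(CY s a j := z)) = Xm p" by (rule ext) (simp add: Xm_def)
lemma Ym_upd_X: "Ym (p(CX s a j := z)) = Ym p" by (rule ext) (simp add: Ym_def)
lemma Zs_upd_V: "Zs (p(CV s a j := z)) = Zs p"
  by (rule ext) (simp add: Zs_def Xm_upd_V Ym_upd_V)
lemma Zs_upd_W: "Zs (p(CW s a j := z)) = Zs p"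
  by (rule ext) (simp add: Zs_def Xm_upd_W Ym_upd_W)
lemma Zbig_upd_V: "Zbig m (p(CV s a j := z)) = Zbig m p"
  unfolding Zbig_def Zs_upd_V ..
lemma Zbig_upd_W: "Zbig m (p(CW s a j := z)) = Zbig m p"
  unfolding Zbig_def Zs_upd_W ..

lemma nz_Suc: "(1::complex) + of_nat q \<noteq> 0"
  by (metis of_nat_Suc of_nat_eq_0_iff nat.simps(3))

lemma pderiv_V: "pderiv_coord (Hk m k) p (CV s a j) = 0"
  unfolding pderiv_coord_def Hk_def Zbig_upd_V by (rule DERIV_imp_deriv) simp
lemma pderiv_W: "pderiv_coord (Hk m k) p (CW s a j) = 0"
  unfolding pderiv_coord_def Hk_def Zbig_upd_W by (rule DERIV_imp_deriv) simp

lemma trace_E: "trace (G ** (\<chi> x y. if x = i \<and> y = j then 1 else 0)) = (G $ j $ i :: complex)"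
proof -
  have "trace (G ** (\<chi> x y. if x = i \<and> y = j then 1 else 0)) = (\<Sum>x\<in>UNIV. if x = j then G $ x $ i else 0)"
    unfolding trace_def mm_ent by (intro sum.cong refl) (simp add: if_distrib[of "\<lambda>v. _ * v"] cong: if_cong)
  then show ?thesis by simp
qed

lemma pderiv_Y:
  assumes r: "r < m" and m: "0 < m"
  shows "pderiv_coord (Hk m (Suc q)) p (CY r i j) = Gb m q p r $ j $ i"
proof -
  define E where "E = (\<chi> x y. if x = i \<and> y = j then (1::complex) else 0)"
  define B' where "B' = (\<lambda>a b. if a = sucm m b \<and> b = r then E else 0)"
  define B where "B z = Zbig m (p(CY r i j := z))" for z
  have d: "((\<lambda>z. B z a b $ x $ y) has_field_derivative B' a b $ x $ y) (at (p (CY r i j)))" for a b x y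
  proof (cases "a = sucm m b")
    case True
    show ?thesis
    proof (cases "b = r \<and> x = i \<and> y = j")
      case True
      then show ?thesis using \<open>a = sucm m b\<close>
        by (auto simp: B_def B'_def E_def Zbig_def Zs_def Xm_upd_Y Ym_def intro!: derivative_eq_intros)
    next
      case False
      then have "B' a b $ x $ y = 0" by (auto simp: B'_def E_def)
      moreover have "(\<lambda>z. B z a b $ x $ y) = (\<lambda>z. B (p (CY r i j)) a b $ x $ y)"
        using False by (auto simp: B_def Zbig_def Zs_def Xm_upd_Y Ym_def)
      ultimately show ?thesis by simp
    qed
  qed (simp add: B_def B'_def Zbig_def)
  have B0: "B (p (CY r i j)) = Zbig m p" by (simp add: B_def)
  have "((\<lambda>z. Hk m (Suc q) (p(CY r i j := z))) has_field_derivative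
      1 / of_nat (Suc q) * (of_nat (Suc q) * btrace m (bmul m (bpow m (B (p (CY r i j))) q) B'))) (at (p (CY r i j)))"
    unfolding Hk_def B_def[symmetric] by (intro DERIV_cmult trace_pow_deriv d)
  then have "pderiv_coord (Hk m (Suc q)) p (CY r i j) = btrace m (bmul m (bpow m (Zbig m p) q) B')"
    unfolding pderiv_coord_def B0 by (rule DERIV_imp_deriv[THEN trans]) (simp add: nz_Suc)
  also have "\<dots> = trace (bpow m (Zbig m p) q r (sucm m r) ** E)"
    unfolding B'_def by (rule btrace_single[OF r m])
  finally show ?thesis by (simp add: E_def trace_E Gb_def)
qed

lemma trace_K: "trace (G ** (\<chi> x y. - (Ai $ x $ i * Ai $ j $ y))) = - (Ai ** G ** Ai) $ j $ (i::'n::finite) "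
  for G Ai :: "complex^'n^'n"
proof -
  have "trace (G ** (\<chi> x y. - (Ai $ x $ i * Ai $ j $ y))) = - (\<Sum>x\<in>UNIV. \<Sum>l\<in>UNIV. Ai $ j $ x * G $ x $ l * Ai $ l $ i)"
    unfolding trace_def mm_ent by (simp add: sum_negf mult_ac)
  also have "\<dots> = - (Ai ** G ** Ai) $ j $ i"
    by (simp add: mm_ent sum_distrib_left sum_distrib_right mult_ac) (rule sum.swap)
  finally show ?thesis .
qed

lemma pderiv_X:
  assumes r: "r < m" and m: "0 < m" and inv: "invertible (Xm p r)"
  shows "pderiv_coord (Hk m (Suc q)) p (CX r i j) = - (matrix_inv (Xm p r) ** Gb m q p r ** matrix_inv (Xm p r)) $ j $ i"
proof -
  define Ai where "Ai = matrix_inv (Xm p r)"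
  define z0 where "z0 = p (CX r i j)"
  define S where "S = {z. 1 + (z - z0) * Ai $ j $ i \<noteq> 0}"
  define SMz where "SMz z = (\<chi> a b. Ai $ a $ b - (z - z0) / (1 + (z - z0) * Ai $ j $ i) * (Ai $ a $ i * Ai $ j $ b))" for z
  define Bt where "Bt z = (\<lambda>a b. if a = sucm m b then (if b = r then Ym p r + SMz z else Zs p b) else 0)" for z
  define K where "K = (\<chi> x y. - (Ai $ x $ i * Ai $ j $ y))"
  define B' where "B' = (\<lambda>a b. if a = sucm m b \<and> b = r then K else 0)"
  have oS: "open S" unfolding S_def
    by (rule open_Collect_neq) (auto intro!: continuous_intros)
  have z0S: "z0 \<in> S" by (simp add: S_def)
  have d: "((\<lambda>z. Bt z a b $ x $ y) has_field_derivative B' a b $ x $ y) (at z0)" for a b x y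
  proof (cases "a = sucm m b \<and> b = r")
    case True
    then show ?thesis
      by (auto simp: Bt_def B'_def K_def SMz_def intro!: derivative_eq_intros)
  next
    case False
    then have "B' a b $ x $ y = 0" by (auto simp: B'_def)
    moreover have "(\<lambda>z. Bt z a b $ x $ y) = (\<lambda>z. Bt z0 a b $ x $ y)"
      using False by (auto simp: Bt_def)
    ultimately show ?thesis by simp
  qed
  have Bt0: "Bt z0 = Zbig m p"
    by (rule ext)+ (simp add: Bt_def Zbig_def Zs_def SMz_def Ai_def)
  have eq: "Hk m (Suc q) (p(CX r i j := z)) = 1 / of_nat (Suc q) * btrace m (bpow m (Bt z) (Suc q))" if zS: "z \<in> S" for z
  proof -
    have Xr: "Xm (p(CX r i j := z)) r = (\<chi> x y. if x = i \<and> y = j then Xm p r $ i $ j + (z - z0) else Xm p r $ x $ y)"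
      by (simp add: Xm_def vec_eq_iff z0_def)
    have "Zbig m (p(CX r i j := z)) = Bt z"
    proof (rule ext)+
      fix a b
      show "Zbig m (p(CX r i j := z)) a b = Bt z a b"
      proof (cases "b = r")
        case True
        have "matrix_inv (Xm (p(CX r i j := z)) r) = SMz z"
          unfolding Xr SMz_def Ai_def by (rule SM[OF inv]) (use zS in \<open>simp add: S_def Ai_def\<close>)
        then show ?thesis using True by (simp add: Zbig_def Bt_def Zs_def Ym_upd_X)
      next
        case False
        have "Xm (p(CX r i j := z)) b = Xm p b" using False by (simp add: Xm_def)
        then show ?thesis using False by (simp add: Zbig_def Bt_def Zs_def Ym_upd_X)
      qed
    qed
    then show ?thesis by (simp add: Hk_def)
  qed
  have "((\<lambda>z. 1 / of_nat (Suc q) * btrace m (bpow m (Bt z) (Suc q))) has_field_derivative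
      1 / of_nat (Suc q) * (of_nat (Suc q) * btrace m (bmul m (bpow m (Bt z0) q) B'))) (at z0)"
    by (intro DERIV_cmult trace_pow_deriv d)
  then have "((\<lambda>z. Hk m (Suc q) (p(CX r i j := z))) has_field_derivative
      1 / of_nat (Suc q) * (of_nat (Suc q) * btrace m (bmul m (bpow m (Bt z0) q) B'))) (at z0)"
    by (rule has_field_derivative_transform_within_open[OF _ oS z0S]) (simp add: eq)
  then have "pderiv_coord (Hk m (Suc q)) p (CX r i j) = btrace m (bmul m (bpow m (Zbig m p) q) B')"
    unfolding pderiv_coord_def z0_def[symmetric] Bt0 by (rule DERIV_imp_deriv[THEN trans]) (simp add: nz_Suc)
  also have "\<dots> = trace (bpow m (Zbig m p) q r (sucm m r) ** K)"
    unfolding B'_def by (rule btrace_single[OF r m])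
  finally show ?thesis by (simp add: K_def trace_K Gb_def Ai_def)
qed

lemma mult_if0_left: "(if P then x else 0) * y = (if P then x * y else (0::'a::mult_zero))" by simp
lemma mult_if0_right: "y * (if P then x else 0) = (if P then y * x else (0::'a::mult_zero))" by simp
lemma sum_if_out: "(\<Sum>i\<in>A. if P then f i else 0) = (if P then (\<Sum>i\<in>A. f i) else 0)" by simp
lemma sum_pred: "(s::nat) < m \<Longrightarrow> (\<Sum>r<m. if s = predm m r then f r else 0) = f (sucm m s)"
proof -
  assume s: "s < m"
  then have m: "0 < m" by simp
  have "(\<Sum>r<m. if s = predm m r then f r else 0) = (\<Sum>r<m. if r = sucm m s then f r else 0)"
    by (rule sum.cong) (auto simp: eq_predm_iff s)
  then show ?thesis using sucm_lt[OF m] by simp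
qed
lemma sum_suc: "(s::nat) < m \<Longrightarrow> (\<Sum>r<m. if s = sucm m r then f r else 0) = f (predm m s)"
proof -
  assume s: "s < m"
  then have m: "0 < m" by simp
  have "(\<Sum>r<m. if s = sucm m r then f r else 0) = (\<Sum>r<m. if r = predm m s then f r else 0)"
    by (rule sum.cong) (auto simp: eq_sucm_iff s)
  then show ?thesis using predm_lt[OF m] by simp
qed

lemmas collapse = dlt_def mult_if0_left mult_if0_right sum_if_out sum_subtractf sum.distrib
  ring_distribs sum_pred sum_suc

lemma fold1: "(\<Sum>j\<in>UNIV. A $ k $ j * B $ j $ l) = (A ** B) $ k $ l" for A B :: "complex^'n::finite^'n" by (simp add: mm_ent)
lemma fold2: "(\<Sum>j\<in>UNIV. B $ j $ l * A $ k $ j) = (A ** B) $ k $ l" for A B :: "complex^'n::finite^'n"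
  unfolding mm_ent by (rule sum.cong) (simp_all add: mult.commute)
lemma fold1d: "(\<Sum>j\<in>UNIV. A $ k $ j * B $ j $ l / c) = (A ** B) $ k $ l / (c::complex)" by (simp add: mm_ent sum_divide_distrib)
lemma fold2d: "(\<Sum>j\<in>UNIV. B $ j $ l * A $ k $ j / c) = (A ** B) $ k $ l / (c::complex)"
  for A B :: "complex^'n::finite^'n" unfolding sum_divide_distrib[symmetric] fold2 ..
lemma foldA: "(\<Sum>i\<in>UNIV. \<Sum>j\<in>UNIV. D $ j $ i * (A $ k $ j * B $ i $ l) / c) = (A ** D ** B) $ k $ l / (c::complex)"
  by (simp add: mm_ent sum_divide_distrib sum_distrib_left sum_distrib_right mult_ac)
lemma foldC: "(\<Sum>i\<in>UNIV. \<Sum>j\<in>UNIV. D $ j $ i * (B $ i $ l * A $ k $ j) / c) = (A ** D ** B) $ k $ l / (c::complex)"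
  by (simp add: mm_ent sum_divide_distrib sum_distrib_left sum_distrib_right mult_ac)
lemma foldD: "(\<Sum>i\<in>UNIV. \<Sum>j\<in>UNIV. D $ j $ i * (v $ j * A $ i $ l) / c) = ((v v* D) v* A) $ l / (c::complex)"
  by (simp add: vector_matrix_mult_def sum_divide_distrib sum_distrib_left sum_distrib_right mult_ac)
lemma foldE: "(\<Sum>i\<in>UNIV. \<Sum>j\<in>UNIV. D $ j $ i * (A $ l $ j * w $ i) / c) = (A *v (D *v w)) $ l / (c::complex)"
  by (simp add: matrix_vector_mult_def sum_divide_distrib sum_distrib_left sum_distrib_right mult_ac) (rule sum.swap)
lemma foldF: "(\<Sum>j\<in>UNIV. D $ j $ l * u $ j / c) = (u v* D) $ l / (c::complex)"
  by (simp add: vector_matrix_mult_def sum_divide_distrib mult_ac)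
lemma foldG: "(\<Sum>i\<in>UNIV. D $ l $ i * u $ i / c) = (D *v u) $ l / (c::complex)"
  by (simp add: matrix_vector_mult_def sum_divide_distrib mult_ac)
lemma divide_if0: "(if P then x else 0) / c = (if P then x / c else (0::complex))" by simp
lemmas folds = fold1 fold2 fold1d fold2d foldA foldC foldD foldE foldF foldG divide_if0


lemma predm_lt': "s < m \<Longrightarrow> predm m s < m" by (simp add: predm_lt)
lemma sucm_lt': "s < m \<Longrightarrow> sucm m s < m" by (simp add: sucm_lt)

lemmas csimps = qbr_def collapse predm_sucm sucm_predm folds predm_lt' sucm_lt'

lemma c1: "s < m \<Longrightarrow> (\<Sum>r<m. \<Sum>i\<in>UNIV. \<Sum>j\<in>UNIV. DX r $ j $ i * qbr m (CX r i j) (CX s k l) p) =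
  (Xm p s ** Xm p (sucm m s) ** DX (sucm m s)) $ k $ l / 2 - (DX (predm m s) ** (Xm p (predm m s) ** Xm p s)) $ k $ l / 2"
  by (simp add: csimps)
lemma c2: "s < m \<Longrightarrow> (\<Sum>r<m. \<Sum>i\<in>UNIV. \<Sum>j\<in>UNIV. DY r $ j $ i * qbr m (CY r i j) (CX s k l) p) =
  (Ym p (predm m s) ** DY (predm m s) ** Xm p s) $ k $ l / 2 - (DY s $ k $ l + (DY s ** (Ym p s ** Xm p s)) $ k $ l / 2 +
        (Xm p s ** Ym p s ** DY s) $ k $ l / 2) - (Xm p s ** DY (sucm m s) ** Ym p (sucm m s)) $ k $ l / 2"
  by (simp add: csimps)
lemma c3: "s < m \<Longrightarrow> (\<Sum>r<m. \<Sum>i\<in>UNIV. \<Sum>j\<in>UNIV. DX r $ j $ i * qbr m (CX r i j) (CY s k l) p) =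
  DX s $ k $ l + (Ym p s ** Xm p s ** DX s) $ k $ l / 2 + (DX s ** (Xm p s ** Ym p s)) $ k $ l / 2
   - (Xm p (sucm m s) ** DX (sucm m s) ** Ym p s) $ k $ l / 2 + (Ym p s ** DX (predm m s) ** Xm p (predm m s)) $ k $ l / 2"
  by (simp add: csimps)
lemma c4: "s < m \<Longrightarrow> (\<Sum>r<m. \<Sum>i\<in>UNIV. \<Sum>j\<in>UNIV. DY r $ j $ i * qbr m (CY r i j) (CY s k l) p) =
  (DY (sucm m s) ** (Ym p (sucm m s) ** Ym p s)) $ k $ l / 2 - (Ym p s ** Ym p (predm m s) ** DY (predm m s)) $ k $ l / 2"
  by (simp add: csimps)
lemma c5: "s < m \<Longrightarrow> (\<Sum>r<m. \<Sum>i\<in>UNIV. \<Sum>j\<in>UNIV. DX r $ j $ i * qbr m (CX r i j) (CV s a l) p) =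
  (Vv p s a v* Xm p s v* DX s) $ l / 2 - (Vv p s a v* DX (predm m s) v* Xm p (predm m s)) $ l / 2"
  by (simp add: csimps)
lemma c6: "s < m \<Longrightarrow> (\<Sum>r<m. \<Sum>i\<in>UNIV. \<Sum>j\<in>UNIV. DY r $ j $ i * qbr m (CY r i j) (CV s a l) p) =
  (Vv p s a v* Ym p (predm m s) v* DY (predm m s)) $ l / 2 - (Vv p s a v* DY s v* Ym p s) $ l / 2"
  by (simp add: csimps)
lemma c7: "s < m \<Longrightarrow> (\<Sum>r<m. \<Sum>i\<in>UNIV. \<Sum>j\<in>UNIV. DX r $ j $ i * qbr m (CX r i j) (CW s a l) p) =
  (DX (predm m s) *v (Xm p (predm m s) *v Wv p s a)) $ l / 2 - (Xm p s *v (DX s *v Wv p s a)) $ l / 2"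
  by (simp add: csimps)
lemma c8: "s < m \<Longrightarrow> (\<Sum>r<m. \<Sum>i\<in>UNIV. \<Sum>j\<in>UNIV. DY r $ j $ i * qbr m (CY r i j) (CW s a l) p) =
  (DY s *v (Ym p s *v Wv p s a)) $ l / 2 - (Ym p (predm m s) *v (DY (predm m s) *v Wv p s a)) $ l / 2"
  by (simp add: csimps)

lemma mneg_l: "(- A) ** B = - (A ** B)" for A B :: "complex^'n::finite^'n"
  by (simp add: vec_eq_iff mm_ent sum_negf)
lemma mneg_r: "A ** (- B) = - (A ** B)" for A B :: "complex^'n::finite^'n"
  by (simp add: vec_eq_iff mm_ent sum_negf)
lemma matrix_add_rdistrib: "(A + B) ** C = A ** C + B ** C" for A B C :: "complex^'n::finite^'n"
  by (simp add: vec_eq_iff mm_ent sum.distrib distrib_right)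
lemma cancelR: "A ** B = mat 1 \<Longrightarrow> M ** A ** B = M" for A B M :: "complex^'n::finite^'n"
  by (metis matrix_mul_assoc matrix_mul_rid)

lemma algX:
  fixes X Xa Xb Ya Yb Y Ga Gb G Aia Aib Ai Z :: "complex^'n::finite^'n"
  assumes h1: "Xa ** Aia = mat 1" and h2: "Aib ** Xb = mat 1" and h3: "Ai ** X = mat 1" and h4: "X ** Ai = mat 1"
    and z: "Z = Y + Ai" and pa: "Ga ** (Ya + Aia) = Z ** G" and pb: "(Yb + Aib) ** Gb = G ** Z"
  shows "(X ** Xa ** (-(Aia ** Ga ** Aia))) $ k $ l / 2 - ((-(Aib ** Gb ** Aib)) ** (Xb ** X)) $ k $ l / 2 +
   ((Yb ** Gb ** X) $ k $ l / 2 - (G $ k $ l + (G ** (Y ** X)) $ k $ l / 2 + (X ** Y ** G) $ k $ l / 2) - (X ** Ga ** Ya) $ k $ l / 2)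
   = - (X ** (Z ** G)) $ k $ l"
proof -
  have t1: "X ** Xa ** (-(Aia ** Ga ** Aia)) = -(X ** Ga ** Aia)"
    by (simp add: mneg_r matrix_mul_assoc cancelR[OF h1])
  have t2: "(-(Aib ** Gb ** Aib)) ** (Xb ** X) = -(Aib ** Gb ** X)"
    by (simp add: mneg_l matrix_mul_assoc cancelR[OF h2])
  have e1: "X ** Ga ** Ya + X ** Ga ** Aia = X ** Z ** G"
    by (metis matrix_add_ldistrib matrix_mul_assoc pa)
  have e2: "Yb ** Gb ** X + Aib ** Gb ** X = G ** Z ** X"
    by (metis matrix_add_rdistrib pb)
  have e3: "G ** Z ** X = G ** Y ** X + G"
    by (simp add: z matrix_add_ldistrib matrix_add_rdistrib cancelR[OF h3])
  have e4: "X ** Z ** G = X ** Y ** G + G"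
    by (simp add: z matrix_add_ldistrib matrix_add_rdistrib) (metis h4 matrix_mul_assoc matrix_mul_lid)
  have E1: "(X ** Ga ** Ya) $ k $ l = (X ** Y ** G) $ k $ l + G $ k $ l - (X ** Ga ** Aia) $ k $ l"
    using arg_cong[OF e1, of "\<lambda>M. M $ k $ l"] e4 by (simp add: algebra_simps)
  have E2: "(Yb ** Gb ** X) $ k $ l = (G ** Y ** X) $ k $ l + G $ k $ l - (Aib ** Gb ** X) $ k $ l"
    using arg_cong[OF e2, of "\<lambda>M. M $ k $ l"] e3 by (simp add: algebra_simps)
  have E4: "(X ** Z ** G) $ k $ l = (X ** Y ** G) $ k $ l + G $ k $ l"
    using arg_cong[OF e4, of "\<lambda>M. M $ k $ l"] by simp
  show ?thesis
    unfolding t1 t2 by (simp add: matrix_mul_assoc E1 E2 E4 field_simps)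
qed

lemma cancelL: "A ** B = mat 1 \<Longrightarrow> A ** B ** M = M" for A B M :: "complex^'n::finite^'n"
  by simp

lemma algY:
  fixes X Xa Xb Ya Yb Y Ga Gb G Aia Aib Ai Z :: "complex^'n::finite^'n"
  assumes h1: "Xa ** Aia = mat 1" and h2: "Aib ** Xb = mat 1" and h3: "Ai ** X = mat 1" and h4: "X ** Ai = mat 1"
    and z: "Z = Y + Ai" and pa: "Ga ** (Ya + Aia) = Z ** G" and pb: "(Yb + Aib) ** Gb = G ** Z"
  shows "(-(Ai ** G ** Ai)) $ k $ l + (Y ** X ** (-(Ai ** G ** Ai))) $ k $ l / 2 + ((-(Ai ** G ** Ai)) ** (X ** Y)) $ k $ l / 2
   - (Xa ** (-(Aia ** Ga ** Aia)) ** Y) $ k $ l / 2 + (Y ** (-(Aib ** Gb ** Aib)) ** Xb) $ k $ l / 2 +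
   ((Ga ** (Ya ** Y)) $ k $ l / 2 - (Y ** Yb ** Gb) $ k $ l / 2)
   = - (Z ** G ** Ai) $ k $ l"
proof -
  have t1: "Y ** X ** (-(Ai ** G ** Ai)) = -(Y ** G ** Ai)"
    by (simp add: mneg_r matrix_mul_assoc cancelR[OF h4])
  have t2: "(-(Ai ** G ** Ai)) ** (X ** Y) = -(Ai ** G ** Y)"
    by (simp add: mneg_l matrix_mul_assoc cancelR[OF h3])
  have t3: "Xa ** (-(Aia ** Ga ** Aia)) ** Y = -(Ga ** Aia ** Y)"
    by (simp add: mneg_l mneg_r matrix_mul_assoc h1)
  have t4: "Y ** (-(Aib ** Gb ** Aib)) ** Xb = -(Y ** Aib ** Gb)"
    by (simp add: mneg_l mneg_r matrix_mul_assoc cancelR[OF h2])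
  have e1: "Ga ** Ya ** Y + Ga ** Aia ** Y = Z ** G ** Y"
    by (metis matrix_add_ldistrib matrix_add_rdistrib pa)
  have e2: "Y ** Yb ** Gb + Y ** Aib ** Gb = Y ** G ** Z"
    by (metis matrix_add_ldistrib matrix_add_rdistrib matrix_mul_assoc pb)
  have e3: "Z ** G ** Y = Y ** G ** Y + Ai ** G ** Y"
    by (simp add: z matrix_add_rdistrib)
  have e4: "Y ** G ** Z = Y ** G ** Y + Y ** G ** Ai"
    by (simp add: z matrix_add_ldistrib matrix_mul_assoc)
  have e5: "Z ** G ** Ai = Y ** G ** Ai + Ai ** G ** Ai"
    by (simp add: z matrix_add_rdistrib)
  have E1: "(Ga ** Ya ** Y) $ k $ l = (Y ** G ** Y) $ k $ l + (Ai ** G ** Y) $ k $ l - (Ga ** Aia ** Y) $ k $ l"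
    using arg_cong[OF e1, of "\<lambda>M. M $ k $ l"] e3 by (simp add: algebra_simps)
  have E2: "(Y ** Yb ** Gb) $ k $ l = (Y ** G ** Y) $ k $ l + (Y ** G ** Ai) $ k $ l - (Y ** Aib ** Gb) $ k $ l"
    using arg_cong[OF e2, of "\<lambda>M. M $ k $ l"] e4 by (simp add: algebra_simps)
  have E5: "(Z ** G ** Ai) $ k $ l = (Y ** G ** Ai) $ k $ l + (Ai ** G ** Ai) $ k $ l"
    using arg_cong[OF e5, of "\<lambda>M. M $ k $ l"] by simp
  show ?thesis
    unfolding t1 t2 t3 t4 by (simp add: matrix_mul_assoc E1 E2 E5 field_simps)
qed

lemma vm_add: "v v* (A + B) = v v* A + v v* B" for A B :: "complex^'n::finite^'n"
  by (simp add: vec_eq_iff vector_matrix_mult_def sum.distrib distrib_left)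
lemma vm_neg: "v v* (- A) = - (v v* A)" for A :: "complex^'n::finite^'n"
  by (simp add: vec_eq_iff vector_matrix_mult_def sum_negf)
lemma mv_add: "(A + B) *v w = A *v w + B *v w" for A B :: "complex^'n::finite^'n"
  by (simp add: vec_eq_iff matrix_vector_mult_def sum.distrib distrib_right)
lemma mv_neg: "(- A) *v w = - (A *v w)" for A :: "complex^'n::finite^'n"
  by (simp add: vec_eq_iff matrix_vector_mult_def sum_negf)

lemma algV:
  fixes X Xb Yb Y Gb G Aib Ai :: "complex^'n::finite^'n"
  assumes h2: "Aib ** Xb = mat 1" and h4: "X ** Ai = mat 1"
    and pb: "(Yb + Aib) ** Gb = G ** (Y + Ai)"
  shows "(v v* X v* (-(Ai ** G ** Ai))) $ l / 2 - (v v* (-(Aib ** Gb ** Aib)) v* Xb) $ l / 2 +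
     ((v v* Yb v* Gb) $ l / 2 - (v v* G v* Y) $ l / 2) = 0"
proof -
  have t1: "X ** (-(Ai ** G ** Ai)) = -(G ** Ai)"
    by (simp add: mneg_r matrix_mul_assoc h4)
  have t2: "(-(Aib ** Gb ** Aib)) ** Xb = -(Aib ** Gb)"
    by (simp add: mneg_l matrix_mul_assoc cancelR[OF h2])
  have e: "(v v* (Yb ** Gb)) $ l + (v v* (Aib ** Gb)) $ l = (v v* (G ** Y)) $ l + (v v* (G ** Ai)) $ l"
    using arg_cong[OF pb, of "\<lambda>M. (v v* M) $ l"] by (simp add: matrix_add_rdistrib matrix_add_ldistrib vm_add)
  show ?thesis
    unfolding vector_matrix_mul_assoc t1 t2 using e by (simp add: vm_neg field_simps) (metis distrib_left add.commute)
qed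

lemma algW:
  fixes X Xb Yb Y Gb G Aib Ai :: "complex^'n::finite^'n"
  assumes h2: "Aib ** Xb = mat 1" and h4: "X ** Ai = mat 1"
    and pb: "(Yb + Aib) ** Gb = G ** (Y + Ai)"
  shows "((-(Aib ** Gb ** Aib)) *v (Xb *v w)) $ l / 2 - (X *v ((-(Ai ** G ** Ai)) *v w)) $ l / 2 +
     ((G *v (Y *v w)) $ l / 2 - (Yb *v (Gb *v w)) $ l / 2) = 0"
proof -
  have t1: "X ** (-(Ai ** G ** Ai)) = -(G ** Ai)"
    by (simp add: mneg_r matrix_mul_assoc h4)
  have t2: "(-(Aib ** Gb ** Aib)) ** Xb = -(Aib ** Gb)"
    by (simp add: mneg_l matrix_mul_assoc cancelR[OF h2])
  have e: "((Yb ** Gb) *v w) $ l + ((Aib ** Gb) *v w) $ l = ((G ** Y) *v w) $ l + ((G ** Ai) *v w) $ l"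
    using arg_cong[OF pb, of "\<lambda>M. (M *v w) $ l"] by (simp add: matrix_add_rdistrib matrix_add_ldistrib mv_add)
  show ?thesis
    unfolding matrix_vector_mul_assoc t1 t2 using e by (simp add: mv_neg field_simps) (metis distrib_left add.commute)
qed

definition VWS :: "nat \<Rightarrow> (nat \<Rightarrow> nat) \<Rightarrow> ('n::finite) coord set" where
  "VWS m d = {CV s a j | s a j. s < m \<and> a < d s} \<union> {CW s a j | s a j. s < m \<and> a < d s}"

lemma coords_split: "coords m d = (\<lambda>(r,i,j). CX r i j) ` ({..<m} \<times> UNIV \<times> UNIV) \<union>
   (\<lambda>(r,i,j). CY r i j) ` ({..<m} \<times> UNIV \<times> UNIV) \<union> VWS m d"
  by (auto simp: coords_def VWS_def image_iff)

lemma finite_VWS: "finite (VWS m d :: ('n::finite) coord set)"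
proof -
  have "VWS m d \<subseteq> (\<lambda>((s,a),j). CV s a j) ` (Sigma {..<m} (\<lambda>s. {..<d s}) \<times> UNIV) \<union>
      (\<lambda>((s,a),j). CW s a j) ` (Sigma {..<m} (\<lambda>s. {..<d s}) \<times> UNIV)"
    by (auto simp: VWS_def image_iff)
  moreover have "finite ((\<lambda>((s,a),j). CV s a j) ` (Sigma {..<m} (\<lambda>s. {..<d s}) \<times> (UNIV :: 'n set)) \<union>
      (\<lambda>((s,a),j). CW s a j) ` (Sigma {..<m} (\<lambda>s. {..<d s}) \<times> (UNIV :: 'n set)))"
    by (intro finite_UnI finite_imageI finite_cartesian_product finite_SigmaI) auto
  ultimately show ?thesis by (rule finite_subset)
qed

lemma sum_CX: "(\<Sum>c\<in>(\<lambda>(r,i,j). CX r i j) ` ({..<m} \<times> UNIV \<times> UNIV). f c) = (\<Sum>r<m. \<Sum>i\<in>UNIV. \<Sum>j\<in>UNIV. f (CX r i (j::'n::finite)))"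
proof -
  have "(\<Sum>c\<in>(\<lambda>(r,i,j). CX r i j) ` ({..<m} \<times> UNIV \<times> UNIV). f c) = (\<Sum>x\<in>{..<m} \<times> UNIV \<times> UNIV. f (case x of (r,i,j) \<Rightarrow> CX r i (j::'n)))"
    by (subst sum.reindex) (auto simp: inj_on_def)
  also have "\<dots> = (\<Sum>r<m. \<Sum>i\<in>UNIV. \<Sum>j\<in>UNIV. f (CX r i j))"
    by (simp add: sum.cartesian_product' case_prod_beta UNIV_Times_UNIV[symmetric] del: UNIV_Times_UNIV)
  finally show ?thesis .
qed

lemma sum_CY: "(\<Sum>c\<in>(\<lambda>(r,i,j). CY r i j) ` ({..<m} \<times> UNIV \<times> UNIV). f c) = (\<Sum>r<m. \<Sum>i\<in>UNIV. \<Sum>j\<in>UNIV. f (CY r i (j::'n::finite)))"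
proof -
  have "(\<Sum>c\<in>(\<lambda>(r,i,j). CY r i j) ` ({..<m} \<times> UNIV \<times> UNIV). f c) = (\<Sum>x\<in>{..<m} \<times> UNIV \<times> UNIV. f (case x of (r,i,j) \<Rightarrow> CY r i (j::'n)))"
    by (subst sum.reindex) (auto simp: inj_on_def)
  also have "\<dots> = (\<Sum>r<m. \<Sum>i\<in>UNIV. \<Sum>j\<in>UNIV. f (CY r i j))"
    by (simp add: sum.cartesian_product' case_prod_beta UNIV_Times_UNIV[symmetric] del: UNIV_Times_UNIV)
  finally show ?thesis .
qed

lemma ham_Hk:
  fixes p :: "('n::finite) point"
  shows "ham m d (Hk m k) g p =
    (\<Sum>r<m. \<Sum>i\<in>UNIV. \<Sum>j\<in>UNIV. pderiv_coord (Hk m k) p (CX r i j) * qbr m (CX r i j) g p) +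
    (\<Sum>r<m. \<Sum>i\<in>UNIV. \<Sum>j\<in>UNIV. pderiv_coord (Hk m k) p (CY r i j) * qbr m (CY r i j) g p)"
proof -
  let ?f = "\<lambda>c. pderiv_coord (Hk m k) p c * qbr m c g p"
  let ?A = "(\<lambda>(r,i,j). CX r i j) ` ({..<m} \<times> UNIV \<times> UNIV) :: 'n coord set"
  let ?B = "(\<lambda>(r,i,j). CY r i j) ` ({..<m} \<times> UNIV \<times> UNIV) :: 'n coord set"
  have fA: "finite ?A" and fB: "finite ?B" by auto
  have "ham m d (Hk m k) g p = sum ?f (?A \<union> ?B \<union> VWS m d)"
    unfolding ham_def coords_split ..
  also have "\<dots> = sum ?f (?A \<union> ?B) + sum ?f (VWS m d)"
  proof (rule sum.union_disjoint)
    show "finite (VWS m d :: 'n coord set)" by (rule finite_VWS)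
    show "(?A \<union> ?B) \<inter> VWS m d = {}" by (auto simp: VWS_def)
  qed (auto simp: fA fB)
  also have "sum ?f (?A \<union> ?B) = sum ?f ?A + sum ?f ?B"
    by (rule sum.union_disjoint) (auto simp: fA fB)
  also have "sum ?f (VWS m d) = 0"
    by (rule sum.neutral) (auto simp: VWS_def pderiv_V pderiv_W)
  finally show ?thesis by (simp only: sum_CX sum_CY add_0_right)
qed

lemma ham_DXDY:
  fixes p :: "('n::finite) point"
  assumes m: "0 < m" and inv: "\<forall>r<m. invertible (Xm p r)"
  shows "ham m d (Hk m (Suc q)) g p =
    (\<Sum>r<m. \<Sum>i\<in>UNIV. \<Sum>j\<in>UNIV. (\<lambda>r. - (matrix_inv (Xm p r) ** Gb m q p r ** matrix_inv (Xm p r))) r $ j $ i * qbr m (CX r i j) g p) +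
    (\<Sum>r<m. \<Sum>i\<in>UNIV. \<Sum>j\<in>UNIV. (\<lambda>r. Gb m q p r) r $ j $ i * qbr m (CY r i j) g p)"
  unfolding ham_Hk by (simp add: pderiv_X pderiv_Y m inv)

lemma Pb_a: "0 < m \<Longrightarrow> s < m \<Longrightarrow> Gb m q p (sucm m s) ** (Ym p (sucm m s) + matrix_inv (Xm p (sucm m s))) = Zs p s ** Gb m q p s"
  using Pb_self[of m "sucm m s" q p] Pb_suc[of m s q p] by (simp add: sucm_lt Zs_def)
lemma Pb_b: "0 < m \<Longrightarrow> s < m \<Longrightarrow> (Ym p (predm m s) + matrix_inv (Xm p (predm m s))) ** Gb m q p (predm m s) = Gb m q p s ** Zs p s"
  using Pb_self[of m s q p] Pb_suc[of m "predm m s" q p] by (simp add: predm_lt sucm_predm Zs_def)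

lemma ham_X_val:
  fixes p :: "('n::finite) point"
  assumes m: "0 < m" and s: "s < m" and inv: "\<And>r. r < m \<Longrightarrow> invertible (Xm p r)"
  shows "ham m d (Hk m (Suc q)) (CX s k l) p = - (Xm p s ** Pb m q p (sucm m s)) $ k $ l"
proof -
  have a: "sucm m s < m" and b: "predm m s < m" using m by (auto simp: sucm_lt predm_lt)
  have inv': "\<forall>r<m. invertible (Xm p r)" using inv by blast
  show ?thesis
    apply (subst ham_DXDY[OF m inv'])
    apply (subst c1[OF s])
    apply (subst c2[OF s])
    apply (subst Pb_suc[OF m s])
    apply (rule algX[OF matrix_inv_props(1)[OF inv[OF a]] matrix_inv_props(2)[OF inv[OF b]]
          matrix_inv_props(2)[OF inv[OF s]] matrix_inv_props(1)[OF inv[OF s]] Zs_def Pb_a[OF m s] Pb_b[OF m s]])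
    done
qed

lemma ham_Y_val:
  fixes p :: "('n::finite) point"
  assumes m: "0 < m" and s: "s < m" and inv: "\<And>r. r < m \<Longrightarrow> invertible (Xm p r)"
  shows "ham m d (Hk m (Suc q)) (CY s k l) p = - (Pb m q p (sucm m s) ** matrix_inv (Xm p s)) $ k $ l"
proof -
  have a: "sucm m s < m" and b: "predm m s < m" using m by (auto simp: sucm_lt predm_lt)
  have inv': "\<forall>r<m. invertible (Xm p r)" using inv by blast
  show ?thesis
    unfolding ham_DXDY[OF m inv'] c3[OF s] c4[OF s] Pb_suc[OF m s]
    by (rule algY[OF matrix_inv_props(1)[OF inv[OF a]] matrix_inv_props(2)[OF inv[OF b]]
          matrix_inv_props(2)[OF inv[OF s]] matrix_inv_props(1)[OF inv[OF s]] Zs_def Pb_a[OF m s] Pb_b[OF m s]])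
qed

lemma ham_V_val:
  fixes p :: "('n::finite) point"
  assumes m: "0 < m" and s: "s < m" and inv: "\<And>r. r < m \<Longrightarrow> invertible (Xm p r)"
  shows "ham m d (Hk m (Suc q)) (CV s a l) p = 0"
proof -
  have b: "predm m s < m" using m by (auto simp: predm_lt)
  have inv': "\<forall>r<m. invertible (Xm p r)" using inv by blast
  show ?thesis
    unfolding ham_DXDY[OF m inv'] c5[OF s] c6[OF s]
    by (rule algV[OF matrix_inv_props(2)[OF inv[OF b]] matrix_inv_props(1)[OF inv[OF s]] Pb_b[OF m s, unfolded Zs_def]])
qed

lemma ham_W_val:
  fixes p :: "('n::finite) point"
  assumes m: "0 < m" and s: "s < m" and inv: "\<And>r. r < m \<Longrightarrow> invertible (Xm p r)"
  shows "ham m d (Hk m (Suc q)) (CW s a l) p = 0"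
proof -
  have b: "predm m s < m" using m by (auto simp: predm_lt)
  have inv': "\<forall>r<m. invertible (Xm p r)" using inv by blast
  show ?thesis
    unfolding ham_DXDY[OF m inv'] c7[OF s] c8[OF s]
    by (rule algW[OF matrix_inv_props(2)[OF inv[OF b]] matrix_inv_props(1)[OF inv[OF s]] Pb_b[OF m s, unfolded Zs_def]])
qed

lemma mpow_scale: "mpow (c *\<^sub>R A) j = (c ^ j) *\<^sub>R mpow A j"
  by (induction j) (simp_all add: mpow_Suc matrix_scalar_ac scalar_matrix_assoc[symmetric])

lemma bpow_diag:
  assumes D: "\<And>a b. a < m \<Longrightarrow> b < m \<Longrightarrow> a \<noteq> b \<Longrightarrow> D a b = 0"
  shows "a < m \<Longrightarrow> b < m \<Longrightarrow> bpow m D j a b = (if a = b then mpow (D a a) j else 0)"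
proof (induction j arbitrary: a b)
  case 0 then show ?case by (simp add: bpow_0 bid_def)
next
  case (Suc j)
  have "bpow m D (Suc j) a b = (\<Sum>c<m. D a c ** bpow m D j c b)" by (simp add: bpow_Suc bmul_def)
  also have "\<dots> = D a a ** bpow m D j a b"
    by (rule sum_single[OF Suc.prems(1)]) (simp add: D Suc.prems)
  finally show ?case using Suc by (simp add: mpow_Suc)
qed

lemma EF_deriv_neg: "((\<lambda>t. EF A (-t) $ l $ b) has_vector_derivative (EF A (-t) ** A) $ l $ b) (at t)"
proof -
  have "(((\<lambda>t. EF A t $ l $ b) \<circ> (\<lambda>t. -t)) has_vector_derivative (- 1) *\<^sub>R (- (EF A (-t) ** A) $ l $ b)) (at t)"
    by (rule vector_diff_chain_at) (auto intro!: derivative_eq_intros EF_deriv)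
  then show ?thesis by (simp add: o_def)
qed

lemma EF_inv': "EF A (-t) ** EF A t = mat 1"
  using EF_inv[of A "-t"] by simp

lemma invertible_of_right: "A ** B = mat 1 \<Longrightarrow> invertible A" for A B :: "complex^'n::finite^'n"
  using matrix_inv_eq(2) by blast

lemma X0_inv:
  fixes p :: "('n::finite) point"
  assumes bi: "binvertible m (Xbig m p)" and s: "s < m"
  shows "invertible (Xm p s)"
proof -
  have m: "0 < m" using s by simp
  obtain B where B: "\<forall>a<m. \<forall>b<m. bmul m (Xbig m p) B a b = bid m a b \<and> bmul m B (Xbig m p) a b = bid m a b"
    using bi unfolding binvertible_def by blast
  have "bmul m (Xbig m p) B s s = (\<Sum>c<m. Xbig m p s c ** B c s)" by (simp add: bmul_def)
  also have "\<dots> = Xbig m p s (sucm m s) ** B (sucm m s) s"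
    by (rule sum_single[OF sucm_lt[OF m]]) (simp add: Xbig_def)
  finally have "Xm p s ** B (sucm m s) s = mat 1" using B s by (simp add: Xbig_def bid_def)
  then show ?thesis by (rule invertible_of_right)
qed

lemma matrix_sub_ldistrib: "A ** (B - C) = A ** B - A ** C" for A B C :: "complex^'n::finite^'n"
  by (simp add: vec_eq_iff mm_ent right_diff_distrib sum_subtractf)
lemma matrix_sub_rdistrib: "(B - C) ** A = B ** A - C ** A" for A B C :: "complex^'n::finite^'n"
  by (simp add: vec_eq_iff mm_ent left_diff_distrib sum_subtractf)

lemma Z_invertible:
  fixes X Y :: "complex^'n::finite^'n"
  assumes iX: "invertible X" and h: "invertible (mat 1 + X ** Y)"
  shows "invertible (Y + matrix_inv X)"
proof -
  have e: "mat 1 + X ** Y = X ** (Y + matrix_inv X)"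
    by (simp add: matrix_add_ldistrib matrix_inv_props(1)[OF iX] add.commute)
  have iA: "invertible (matrix_inv X)" by (rule invertible_of_right[OF matrix_inv_props(2)[OF iX]])
  have "Y + matrix_inv X = matrix_inv X ** (X ** (Y + matrix_inv X))"
    by (simp add: matrix_mul_assoc matrix_inv_props(2)[OF iX])
  then show ?thesis using invertible_mult[OF iA h[unfolded e]] by simp
qed

lemma XY_invertible1:
  fixes X Z :: "complex^'n::finite^'n"
  assumes "invertible X" "invertible Z"
  shows "invertible (mat 1 + X ** (Z - matrix_inv X))"
proof -
  have "mat 1 + X ** (Z - matrix_inv X) = X ** Z"
    by (simp add: matrix_sub_ldistrib matrix_inv_props(1)[OF assms(1)])
  then show ?thesis using invertible_mult[OF assms] by simp
qed

lemma XY_invertible2: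
  fixes X Z :: "complex^'n::finite^'n"
  assumes "invertible X" "invertible Z"
  shows "invertible (mat 1 + (Z - matrix_inv X) ** X)"
proof -
  have "mat 1 + (Z - matrix_inv X) ** X = Z ** X"
    by (simp add: matrix_sub_rdistrib matrix_inv_props(2)[OF assms(1)])
  then show ?thesis using invertible_mult[OF assms(2,1)] by simp
qed

lemma binv_lemma:
  fixes p :: "('n::finite) point"
  assumes m: "0 < m" and inv: "\<And>r. r < m \<Longrightarrow> invertible (Xm p r)"
  shows "binvertible m (Xbig m p)"
  unfolding binvertible_def
proof (intro exI allI impI conjI)
  define B where "B = (\<lambda>a b. if a = sucm m b then matrix_inv (Xm p b) else 0)"
  fix a b assume a: "a < m" and b: "b < m"
  have "bmul m (Xbig m p) B a b = Xbig m p a (sucm m a) ** B (sucm m a) b"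
    unfolding bmul_def by (rule sum_single[OF sucm_lt[OF m]]) (simp add: Xbig_def)
  also have "\<dots> = bid m a b"
    using a b by (auto simp: Xbig_def B_def bid_def sucm_inj matrix_inv_props(1)[OF inv])
  finally show "bmul m (Xbig m p) B a b = bid m a b" .
  have "bmul m B (Xbig m p) a b = B a (predm m a) ** Xbig m p (predm m a) b"
    unfolding bmul_def by (rule sum_single[OF predm_lt[OF m]]) (auto simp: B_def eq_sucm_iff a)
  also have "\<dots> = bid m a b"
    using a b by (auto simp: Xbig_def B_def bid_def sucm_predm matrix_inv_props(2)[OF inv] predm_lt[OF m])
  finally show "bmul m B (Xbig m p) a b = bid m a b" .
qed

theorem proposition3p4:
  fixes m k0 :: nat and d :: "nat \<Rightarrow> nat" and p0 :: "('n::finite) point"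
  assumes "m \<ge> 2" and "d 0 \<ge> 1" and "k0 \<ge> 1"
    and "p0 \<in> Mcirc m d"
  shows "\<exists>\<gamma> :: real \<Rightarrow> 'n point.
     \<gamma> 0 = p0 \<and>
     (\<forall>t. \<gamma> t \<in> Mcirc m d) \<and>
     (\<forall>t. \<forall>a<m. \<forall>b<m. Xbig m (\<gamma> t) a b =
          bmul m (Xbig m p0) (bexp m (\<lambda>a' b'. (- t) *\<^sub>R bpow m (Zbig m p0) (k0 * m) a' b')) a b) \<and>
     (\<forall>t. \<forall>a<m. \<forall>b<m. Zbig m (\<gamma> t) a b = Zbig m p0 a b) \<and>
     (\<forall>t. \<forall>s<m. \<forall>\<alpha><d s. Vv (\<gamma> t) s \<alpha> = Vv p0 s \<alpha> \<and> Wv (\<gamma> t) s \<alpha> = Wv p0 s \<alpha>) \<and>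
     (\<forall>c\<in>coords m d. \<forall>t. ((\<lambda>\<tau>. \<gamma> \<tau> c) has_vector_derivative
          ham m d (Hk m (k0 * m)) c (\<gamma> t)) (at t))"
proof -
  have m0: "0 < m" using assms(1) by simp
  define q where "q = k0 * m - 1"
  have kq: "k0 * m = Suc q" unfolding q_def using assms(1,3) by (simp add: Suc_pred)
  have qm: "Suc q mod m = 0" unfolding kq[symmetric] by simp
  have Mb: "p0 \<in> Mbullet m d" and bi: "binvertible m (Xbig m p0)" using assms(4) by (auto simp: Mcirc_def)
  have inv0: "\<And>s. s < m \<Longrightarrow> invertible (Xm p0 s)" using X0_inv[OF bi] .
  define A where "A s = Pb m q p0 (sucm m s)" for s
  define Xt where "Xt t s = Xm p0 s ** EF (A s) t" for t s
  define Yt where "Yt t s = Zs p0 s - EF (A s) (-t) ** matrix_inv (Xm p0 s)" for t s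
  define \<gamma> where "\<gamma> t = (\<lambda>c. case c of CX s i j \<Rightarrow> if s < m then Xt t s $ i $ j else p0 c
       | CY s i j \<Rightarrow> if s < m then Yt t s $ i $ j else p0 c | CV s a j \<Rightarrow> p0 c | CW s a j \<Rightarrow> p0 c)" for t
  have Xg: "Xm (\<gamma> t) s = Xt t s" if "s < m" for t s
    using that by (simp add: Xm_def \<gamma>_def vec_eq_iff)
  have Yg: "Ym (\<gamma> t) s = Yt t s" if "s < m" for t s
    using that by (simp add: Ym_def \<gamma>_def vec_eq_iff)
  have Vg: "Vv (\<gamma> t) s a = Vv p0 s a" for t s a by (simp add: Vv_def \<gamma>_def)
  have Wg: "Wv (\<gamma> t) s a = Wv p0 s a" for t s a by (simp add: Wv_def \<gamma>_def)
  have XtI: "Xt t s ** (EF (A s) (-t) ** matrix_inv (Xm p0 s)) = mat 1" if "s < m" for t s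
    by (simp add: Xt_def matrix_mul_assoc cancelR[OF EF_inv] matrix_inv_props(1)[OF inv0[OF that]])
  have invXt: "invertible (Xt t s)" if "s < m" for t s by (rule invertible_of_right[OF XtI[OF that]])
  have miXt: "matrix_inv (Xt t s) = EF (A s) (-t) ** matrix_inv (Xm p0 s)" if "s < m" for t s
    by (rule matrix_inv_eq(1)[OF XtI[OF that]])
  have Zg: "Zs (\<gamma> t) s = Zs p0 s" if "s < m" for t s
    using that by (simp add: Zs_def[of "\<gamma> t"] Xg Yg miXt Yt_def)
  have Zbg: "Zbig m (\<gamma> t) a b = Zbig m p0 a b" if "b < m" for t a b
    using that by (simp add: Zbig_def Zg)
  have bpg: "bpow m (Zbig m (\<gamma> t)) j a b = bpow m (Zbig m p0) j a b" if "a < m" "b < m" for t j a b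
    by (rule bpow_cong[OF _ that]) (simp add: Zbg)
  have Pbg: "Pb m q (\<gamma> t) a = Pb m q p0 a" if "a < m" for t a
    using that by (simp add: Pb_def bpg)
  have invg: "\<And>r. r < m \<Longrightarrow> invertible (Xm (\<gamma> t) r)" for t by (simp add: Xg invXt)
  show ?thesis
  proof (intro exI conjI allI impI ballI)
    show "\<gamma> 0 = p0"
    proof (rule ext)
      fix c show "\<gamma> 0 c = p0 c"
        by (cases c) (auto simp: \<gamma>_def Xt_def Yt_def EF_0 Zs_def Xm_def Ym_def)
    qed
  next
    fix t
    have Zinv: "invertible (Zs p0 s)" if "s < m" for s
      using Z_invertible[OF inv0[OF that]] Mb that by (auto simp: Mbullet_def Zs_def)
    have Ygt: "Ym (\<gamma> t) s = Zs p0 s - matrix_inv (Xm (\<gamma> t) s)" if "s < m" for s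
      using that by (simp add: Yg Xg miXt Yt_def)
    show "\<gamma> t \<in> Mcirc m d"
      unfolding Mcirc_def Mbullet_def
    proof (intro CollectI conjI allI impI binv_lemma[OF m0 invg])
      fix s assume s: "s < m"
      show "invertible (mat 1 + Xm (\<gamma> t) s ** Ym (\<gamma> t) s)"
        unfolding Ygt[OF s] by (rule XY_invertible1[OF invg[OF s] Zinv[OF s]])
      show "invertible (mat 1 + Ym (\<gamma> t) s ** Xm (\<gamma> t) s)"
        unfolding Ygt[OF s] by (rule XY_invertible2[OF invg[OF s] Zinv[OF s]])
      fix a assume "a < d s"
      then show "invertible (mat 1 + outer (Wv (\<gamma> t) s a) (Vv (\<gamma> t) s a))"
          "1 + rowcol (Vv (\<gamma> t) s a) (Wv (\<gamma> t) s a) \<noteq> 0"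
        using Mb s by (auto simp: Mbullet_def Vg Wg)
    qed
  next
    fix t a b assume a: "a < m" and b: "b < m"
    define D where "D = (\<lambda>a' b'. (- t) *\<^sub>R bpow m (Zbig m p0) (k0 * m) a' b')"
    have diag: "D a' b' = 0" if "a' < m" "b' < m" "a' \<noteq> b'" for a' b'
      using zpow_k[OF m0 qm that, of p0] by (simp add: D_def kq)
    have bexp_val: "bexp m D c b' = (if c = b' then EF (Pb m q p0 c) t else 0)" if "c < m" "b' < m" for c b'
    proof (cases "c = b'")
      case True
      have "bexp m D c b' = (\<Sum>j. (1 / fact j) *\<^sub>R mpow (D c c) j)"
        unfolding bexp_def using bpow_diag[OF diag that] True by simp
      also have "\<dots> = EF (Pb m q p0 c) t"
        unfolding D_def EF_def kq Pb_def mpow_scale ..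
      finally show ?thesis using True by simp
    next
      case False
      then show ?thesis unfolding bexp_def using bpow_diag[OF diag that] by simp
    qed
    have "bmul m (Xbig m p0) (bexp m D) a b = Xbig m p0 a (sucm m a) ** bexp m D (sucm m a) b"
      unfolding bmul_def by (rule sum_single[OF sucm_lt[OF m0]]) (simp add: Xbig_def)
    also have "\<dots> = Xbig m (\<gamma> t) a b"
      using a b by (simp add: bexp_val sucm_lt[OF m0] Xbig_def Xg Xt_def A_def eq_commute[of b])
    finally show "Xbig m (\<gamma> t) a b = bmul m (Xbig m p0) (bexp m (\<lambda>a' b'. (- t) *\<^sub>R bpow m (Zbig m p0) (k0 * m) a' b')) a b"
      unfolding D_def by simp
  next
    fix t a b assume "a < m" "b < m"
    then show "Zbig m (\<gamma> t) a b = Zbig m p0 a b" by (simp add: Zbg)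
  next
    fix t s \<alpha> show "Vv (\<gamma> t) s \<alpha> = Vv p0 s \<alpha>" by (rule Vg)
  next
    fix t s \<alpha> show "Wv (\<gamma> t) s \<alpha> = Wv p0 s \<alpha>" by (rule Wg)
  next
    fix c :: "'n coord" and t assume c: "c \<in> coords m d"
    from c consider (X) s i j where "c = CX s i j" "s < m" | (Y) s i j where "c = CY s i j" "s < m"
      | (V) s a j where "c = CV s a j" "s < m" | (W) s a j where "c = CW s a j" "s < m"
      by (auto simp: coords_def)
    then show "((\<lambda>\<tau>. \<gamma> \<tau> c) has_vector_derivative ham m d (Hk m (k0 * m)) c (\<gamma> t)) (at t)"
    proof cases
      case X
      have e: "(\<lambda>\<tau>. \<gamma> \<tau> c) = (\<lambda>\<tau>. \<Sum>l\<in>UNIV. Xm p0 s $ i $ l * EF (A s) \<tau> $ l $ j)"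
        using X by (simp add: \<gamma>_def Xt_def mm_ent)
      have d: "((\<lambda>\<tau>. \<Sum>l\<in>UNIV. Xm p0 s $ i $ l * EF (A s) \<tau> $ l $ j) has_vector_derivative
          (\<Sum>l\<in>UNIV. Xm p0 s $ i $ l * (- (EF (A s) t ** A s) $ l $ j))) (at t)"
        by (intro has_vector_derivative_sum has_vector_derivative_mult_right EF_deriv)
      have dv: "(\<Sum>l\<in>UNIV. Xm p0 s $ i $ l * (- (EF (A s) t ** A s) $ l $ j)) = - (Xm p0 s ** (EF (A s) t ** A s)) $ i $ j"
        by (simp only: mult_minus_right sum_negf fold1)
      have v: "ham m d (Hk m (k0 * m)) c (\<gamma> t) = - (Xm p0 s ** (EF (A s) t ** A s)) $ i $ j"
      proof -
        have hv: "ham m d (Hk m (Suc q)) (CX s i j) (\<gamma> t) = - (Xm (\<gamma> t) s ** Pb m q (\<gamma> t) (sucm m s)) $ i $ j"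
          by (rule ham_X_val[OF m0 X(2)]) (rule invg)
        show ?thesis unfolding kq X(1) hv Xg[OF X(2)] Pbg[OF sucm_lt[OF m0]]
          by (simp add: Xt_def A_def matrix_mul_assoc)
      qed
      show ?thesis unfolding e v dv[symmetric] by (rule d)
    next
      case Y
      have e: "(\<lambda>\<tau>. \<gamma> \<tau> c) = (\<lambda>\<tau>. Zs p0 s $ i $ j - (\<Sum>l\<in>UNIV. EF (A s) (-\<tau>) $ i $ l * matrix_inv (Xm p0 s) $ l $ j))"
        using Y by (simp add: \<gamma>_def Yt_def mm_ent)
      have d: "((\<lambda>\<tau>. Zs p0 s $ i $ j - (\<Sum>l\<in>UNIV. EF (A s) (-\<tau>) $ i $ l * matrix_inv (Xm p0 s) $ l $ j)) has_vector_derivative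
          (0 - (\<Sum>l\<in>UNIV. (EF (A s) (-t) ** A s) $ i $ l * matrix_inv (Xm p0 s) $ l $ j))) (at t)"
        by (intro has_vector_derivative_diff has_vector_derivative_const has_vector_derivative_sum
            has_vector_derivative_mult_left EF_deriv_neg)
      have dv: "0 - (\<Sum>l\<in>UNIV. (EF (A s) (-t) ** A s) $ i $ l * matrix_inv (Xm p0 s) $ l $ j)
          = - ((EF (A s) (-t) ** A s) ** matrix_inv (Xm p0 s)) $ i $ j"
        by (simp only: diff_0 fold1)
      have v: "ham m d (Hk m (k0 * m)) c (\<gamma> t) = - ((EF (A s) (-t) ** A s) ** matrix_inv (Xm p0 s)) $ i $ j"
      proof -
        have hv: "ham m d (Hk m (Suc q)) (CY s i j) (\<gamma> t) = - (Pb m q (\<gamma> t) (sucm m s) ** matrix_inv (Xm (\<gamma> t) s)) $ i $ j"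
          by (rule ham_Y_val[OF m0 Y(2)]) (rule invg)
        show ?thesis unfolding kq Y(1) hv Xg[OF Y(2)] Pbg[OF sucm_lt[OF m0]] miXt[OF Y(2)]
          by (simp add: A_def[symmetric] matrix_mul_assoc EF_comm)
      qed
      show ?thesis unfolding e v dv[symmetric] by (rule d)
    next
      case V
      have e: "(\<lambda>\<tau>. \<gamma> \<tau> c) = (\<lambda>\<tau>. p0 c)" using V by (simp add: \<gamma>_def)
      have hv: "ham m d (Hk m (Suc q)) (CV s a j) (\<gamma> t) = 0"
        by (rule ham_V_val[OF m0 V(2)]) (rule invg)
      show ?thesis unfolding e kq by (simp add: V(1) hv)
    next
      case W
      have e: "(\<lambda>\<tau>. \<gamma> \<tau> c) = (\<lambda>\<tau>. p0 c)" using W by (simp add: \<gamma>_def)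
      have hv: "ham m d (Hk m (Suc q)) (CW s a j) (\<gamma> t) = 0"
        by (rule ham_W_val[OF m0 W(2)]) (rule invg)
      show ?thesis unfolding e kq by (simp add: W(1) hv)
    qed
  qed
qed

end
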